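(* Let $T_1=(Q_1,\Sigma,\Delta,R_1,q_1^0)$ and $T_2=(Q_2,\Delta,\Omega,R_2,q_2^0)$ be top-down tree transducers, let $\hat{T}_1$ be the product construction of $T_1$ and the domain automaton of $T_2$, and let $M$ be the look-ahead transducer constructed from $T_1$ and $T_2$ as described in the context. Then the composition $\hat{T}_1\circ T_2$ (i.e., the relation $\mathcal{R}(\hat{T}_1)\circ\mathcal{R}(T_2)$) is functional if and only if $M$ is functional.
   Context: A top-down tree transducer $T=(Q,\Sigma,\Delta,R,q_0)$ has finite state set $Q$, ranked input/output alphabets $\Sigma,\Delta$, initial state $q_0$, and finite rule set $R$ of rules $q(a(x_1,\dots,x_k))\to t$ with $a\in\Sigma_k$ ($\Sigma_k$ = symbols of rank $k$) and $t$ a tree over $\Delta$ whose leaves may additionally be of the form $q'(x_i)$, $q'\in Q$, $i\in[k]$; rules are used as rewrite rules in the usual way. $\mathcal{R}(T)$ is the set of pairs $(s,t)$ with $t$ a tree over $\Delta$ derivable from $q_0(s)$; $\text{dom}(q)$ is the set of inputs $s$ such that some tree over $\Delta$ is derivable from $q(s)$. A relation is functional if it is a (partial) function; $\mathcal{R}_1\circ\mathcal{R}_2=\{(s,u)\mid\exists t:(s,t)\in\mathcal{R}_1,(t,u)\in\mathcal{R}_2\}$. For $q\in Q$, $a\in\Sigma_k$, $\text{rhs}_T(q,a)$ is the set of right-hand sides of rules with left-hand side $q(a(x_1,\dots,x_k))$; for a right-hand side $\xi$ (resp. a set $\Gamma$ of right-hand sides), $\xi[x_i]$ (resp. $\Gamma[x_i]$)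 is the set of states $q'$ such that $q'(x_i)$ occurs in $\xi$ (resp. in some tree of $\Gamma$). Domain automaton of $T$: the top-down tree automaton (transducer over $\Sigma$ with rules of the form $p(a(x_1,\dots,x_k))\to a(p_1(x_1),\dots,p_k(x_k))$) with states all subsets of $Q$, initial state $\{q_0\}$, rules $S(a(x_1,\dots,x_k))\to a(S_1(x_1),\dots,S_k(x_k))$ for every $a\in\Sigma_k$, nonempty $S=\{q_1,\dots,q_n\}\subseteq Q$ and nonempty $\Gamma_j\subseteq\text{rhs}_T(q_j,a)$ ($j\in[n]$), where $S_i=\bigcup_j\Gamma_j[x_i]$, and rules $\emptyset(a(x_1,\dots,x_k))\to a(\emptyset(x_1),\dots,\emptyset(x_k))$ for all $a$; for an automaton state $l$, $\text{dom}(l)$ is the set of trees accepted from $l$. Product construction of transducers $T=(Q,\Sigma,\Delta,R,q_0)$ and $T'=(Q',\Delta,\Omega,R',q'_0)$: the transducer with states $Q\times Q'$, initial state $(q_0,q'_0)$, and, for every rule $q(a(x_1,\dots,x_k))\to\xi$ of $T$, every $p\in Q'$ and every tree $\zeta$ derivable from $p(\xi)$ using rules of $T'$ in which the leaves of $\xi$ of the form $q''(x_i)$ are treated as unrewritable symbols and a state $p'$ applied to such a leaf stays as $p'(q''(x_i))$, the rule $(q,p)(a(x_1,\dots,x_k))\to\zeta'$ (said to be obtained from the rule $q(a(x_1,\dots,x_k))\to\xi$ by translating $\xi$ with $p$), where $\zeta'$ replaces each $p'(q''(x_i))$ by $(q'',p')(x_i)$. A top-down tree transducer with look-ahead is a tuple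 $(Q,\Sigma,\Delta,R,q_0,B)$ where $B$ is a top-down tree automaton over $\Sigma$ with state set $L$ and rules have the form $q(a(x_1\!:\!l_1,\dots,x_k\!:\!l_k))\to t$ with $l_i\in L$; on input $s$, each node $v$ with label $a\in\Sigma_k$ is first relabeled by $\langle a,l_1,\dots,l_k\rangle$ where $l_i\in L$ are such that the $i$-th subtree of $v$ is in $\text{dom}(l_i)$, and the relabeled tree is then processed reading each rule as $q(\langle a,l_1,\dots,l_k\rangle(x_1,\dots,x_k))\to t$; the relation consists of all pairs $(s,r)$ with $r$ obtainable this way. Construction of $M$: let $\hat{T}_1$ be the product construction of $T_1$ and the domain automaton of $T_2$ (states written $(q,S)$ with $q\in Q_1$, $S\subseteq Q_2$), and $N$ the product construction of $\hat{T}_1$ and $T_2$ (states written $(q,S,q')$). The states of $M$ are the $(q,S,q')$ with $q'\in S$; its initial state is $(q_1^0,\{q_2^0\},q_2^0)$; its look-ahead automaton is the domain automaton $\hat{A}$ of $\hat{T}_1$. For every rule $(q,S,q')(a(x_1,\dots,x_k))\to\gamma$ of $N$ involving only such states, obtained from the rule $(q,S)(a(x_1,\dots,x_k))\to\xi$ of $\hat{T}_1$ by translating $\xi$ with $q'$, and for all states $l_1,\dots,l_k$ of $\hat{A}$ with $\xi[x_i]\subseteq l_i$ ($i\in[k]$), $M$ has the rule $(q,S,q')(a(x_1\!:\!l_1,\dots,x_k\!:\!l_k))\to\gamma$. *)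

theory Defs
  imports Main
begin

type_synonym 'f ralph = "'f set \<times> ('f \<Rightarrow> nat)"

datatype 'f tree = T 'f "'f tree list"

text \<open>Trees whose leaves may additionally be of the form Lf v (used for
  right-hand sides, where v = (q', i) stands for q'(x_i), and for sentential forms).\<close>
datatype ('f, 'v) tr = Nd 'f "('f, 'v) tr list" | Lf 'v

fun wt :: "'f ralph \<Rightarrow> 'f tree \<Rightarrow> bool" where
  "wt A (T a ts) = (a \<in> fst A \<and> length ts = snd A a \<and> (\<forall>t\<in>set ts. wt A t))"

definition trees :: "'f ralph \<Rightarrow> 'f tree set" where
  "trees A = {s. wt A s}"

fun emb :: "'f tree \<Rightarrow> ('f, 'v) tr" where
  "emb (T a ts) = Nd a (map emb ts)"

text \<open>A rule (q, a, xi) stands for q(a(x_1,...,x_k)) -> xi, where a leaf Lf (q', i)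
  of xi stands for q'(x_i).\<close>
record ('q, 'f, 'g) tt =
  st :: "'q set"
  inp :: "'f ralph"
  outp :: "'g ralph"
  rl :: "('q \<times> 'f \<times> ('g, 'q \<times> nat) tr) set"
  q0 :: 'q

fun rhs_wf :: "'g ralph \<Rightarrow> 'q set \<Rightarrow> nat \<Rightarrow> ('g, 'q \<times> nat) tr \<Rightarrow> bool" where
  "rhs_wf D Q k (Nd g ts) = (g \<in> fst D \<and> length ts = snd D g \<and> (\<forall>t\<in>set ts. rhs_wf D Q k t))"
| "rhs_wf D Q k (Lf qi) = (fst qi \<in> Q \<and> 1 \<le> snd qi \<and> snd qi \<le> k)"

definition tdtt :: "('q, 'f, 'g) tt \<Rightarrow> bool" where
  "tdtt M \<longleftrightarrow> finite (st M) \<and> finite (fst (inp M)) \<and> finite (fst (outp M)) \<and>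
     finite (rl M) \<and> q0 M \<in> st M \<and>
     (\<forall>(q, a, \<xi>) \<in> rl M. q \<in> st M \<and> a \<in> fst (inp M) \<and> rhs_wf (outp M) (st M) (snd (inp M) a) \<xi>)"

fun subst_rhs :: "('g, 'q \<times> nat) tr \<Rightarrow> ('f, 'v) tr list \<Rightarrow> ('g, 'q \<times> ('f, 'v) tr) tr" where
  "subst_rhs (Nd g ts) ss = Nd g (map (\<lambda>t. subst_rhs t ss) ts)"
| "subst_rhs (Lf qi) ss = Lf (fst qi, ss ! (snd qi - 1))"

text \<open>One rewrite step on sentential forms: output symbols above, leaves
  Lf (q, s) standing for q(s) with s an input tree.  Leaves of the input of
  the form Lf v are unrewritable symbols (no rule applies to them).\<close>
inductive step :: "('q \<times> 'f \<times> ('g, 'q \<times> nat) tr) set \<Rightarrow>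
    ('g, 'q \<times> ('f, 'v) tr) tr \<Rightarrow> ('g, 'q \<times> ('f, 'v) tr) tr \<Rightarrow> bool"
  for R where
  root: "(q, a, \<xi>) \<in> R \<Longrightarrow> step R (Lf (q, Nd a ss)) (subst_rhs \<xi> ss)"
| ctx: "step R u u' \<Longrightarrow> step R (Nd g (ls @ u # rs)) (Nd g (ls @ u' # rs))"

definition derives where
  "derives R = (step R)\<^sup>*\<^sup>*"

definition rel :: "('q, 'f, 'g) tt \<Rightarrow> ('f tree \<times> 'g tree) set" where
  "rel M = {(s, t). s \<in> trees (inp M) \<and> t \<in> trees (outp M) \<and>
     derives (rl M) (Lf (q0 M, emb s :: ('f, unit) tr)) (emb t)}"

definition tdom :: "('q, 'f, 'g) tt \<Rightarrow> 'q \<Rightarrow> 'f tree set" where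
  "tdom M q = {s. s \<in> trees (inp M) \<and>
     (\<exists>t \<in> trees (outp M). derives (rl M) (Lf (q, emb s :: ('f, unit) tr)) (emb t))}"

definition rhs_of :: "('q, 'f, 'g) tt \<Rightarrow> 'q \<Rightarrow> 'f \<Rightarrow> ('g, 'q \<times> nat) tr set" where
  "rhs_of M q a = {\<xi>. (q, a, \<xi>) \<in> rl M}"

definition calls :: "('g, 'q \<times> nat) tr \<Rightarrow> nat \<Rightarrow> 'q set" where
  "calls \<xi> i = {q. (q, i) \<in> set2_tr \<xi>}"

definition calls_set :: "('g, 'q \<times> nat) tr set \<Rightarrow> nat \<Rightarrow> 'q set" where
  "calls_set \<Gamma> i = (\<Union>\<xi>\<in>\<Gamma>. calls \<xi> i)"

definition aut_rhs :: "'f \<Rightarrow> nat \<Rightarrow> (nat \<Rightarrow> 'p) \<Rightarrow> ('f, 'p \<times> nat) tr" where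
  "aut_rhs a k S = Nd a (map (\<lambda>i. Lf (S i, i)) [1..<Suc k])"

definition dom_aut :: "('q, 'f, 'g) tt \<Rightarrow> ('q set, 'f, 'f) tt" where
  "dom_aut M = \<lparr> st = Pow (st M), inp = inp M, outp = inp M,
     rl = {(S, a, aut_rhs a (snd (inp M) a) Si) | S a Si.
             a \<in> fst (inp M) \<and> S \<noteq> {} \<and> S \<subseteq> st M \<and>
             (\<exists>\<Gamma>. (\<forall>q\<in>S. \<Gamma> q \<noteq> {} \<and> \<Gamma> q \<subseteq> rhs_of M q a) \<and>
                  (\<forall>i. Si i = (\<Union>q\<in>S. calls_set (\<Gamma> q) i)))}
        \<union> {({}, a, aut_rhs a (snd (inp M) a) (\<lambda>_. {})) | a. a \<in> fst (inp M)},
     q0 = {q0 M} \<rparr>"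

text \<open>Turning p'(q''(x_i)) into (q'',p')(x_i).\<close>
fun conv_leaf :: "'p \<times> ('g, 'q \<times> nat) tr \<Rightarrow> ('q \<times> 'p) \<times> nat" where
  "conv_leaf (p', Lf (q'', i)) = ((q'', p'), i)"
| "conv_leaf (p', Nd _ _) = undefined"

text \<open>zeta is derivable from p(xi) using the rules of M', leaves of xi being
  unrewritable, and zeta is fully translated (all its leaves are p'(q''(x_i))).\<close>
definition translates :: "('p, 'g, 'h) tt \<Rightarrow> 'p \<Rightarrow> ('g, 'q \<times> nat) tr \<Rightarrow>
    ('h, 'p \<times> ('g, 'q \<times> nat) tr) tr \<Rightarrow> bool" where
  "translates M' p \<xi> \<zeta> \<longleftrightarrow> derives (rl M') (Lf (p, \<xi>)) \<zeta> \<and>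
     (\<forall>x \<in> set2_tr \<zeta>. \<exists>p' q'' i. x = (p', Lf (q'', i)))"

definition product :: "('q, 'f, 'g) tt \<Rightarrow> ('p, 'g, 'h) tt \<Rightarrow> ('q \<times> 'p, 'f, 'h) tt" where
  "product M M' = \<lparr> st = st M \<times> st M', inp = inp M, outp = outp M',
     rl = {((q, p), a, map_tr id conv_leaf \<zeta>) | q p a \<xi> \<zeta>.
             (q, a, \<xi>) \<in> rl M \<and> p \<in> st M' \<and> translates M' p \<xi> \<zeta>},
     q0 = (q0 M, q0 M') \<rparr>"

text \<open>A rule (q, a, [l_1,...,l_k], t) stands for q(a(x_1:l_1,...,x_k:l_k)) -> t.\<close>
record ('q, 'f, 'g, 'l) latt =
  lst :: "'q set"
  linp :: "'f ralph"
  loutp :: "'g ralph"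
  lrl :: "('q \<times> 'f \<times> 'l list \<times> ('g, 'q \<times> nat) tr) set"
  lq0 :: 'q
  la :: "('l, 'f, 'f) tt"

text \<open>Relabeling each node a by <a, l_1, ..., l_k> with the i-th subtree in dom(l_i).\<close>
inductive relabel :: "('l, 'f, 'f) tt \<Rightarrow> 'f tree \<Rightarrow> ('f \<times> 'l list) tree \<Rightarrow> bool" for B where
  "length ls = length ss \<Longrightarrow> length ss' = length ss \<Longrightarrow>
   (\<forall>i < length ss. ls ! i \<in> st B \<and> ss ! i \<in> tdom B (ls ! i) \<and> relabel B (ss ! i) (ss' ! i)) \<Longrightarrow>
   relabel B (T a ss) (T (a, ls) ss')"

definition la_rules :: "('q, 'f, 'g, 'l) latt \<Rightarrow> ('q \<times> ('f \<times> 'l list) \<times> ('g, 'q \<times> nat) tr) set" where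
  "la_rules M = {(q, (a, ls), t) | q a ls t. (q, a, ls, t) \<in> lrl M}"

definition la_rel :: "('q, 'f, 'g, 'l) latt \<Rightarrow> ('f tree \<times> 'g tree) set" where
  "la_rel M = {(s, r). s \<in> trees (linp M) \<and> r \<in> trees (loutp M) \<and>
     (\<exists>s'. relabel (la M) s s' \<and>
        derives (la_rules M) (Lf (lq0 M, emb s' :: ('f \<times> 'l list, unit) tr)) (emb r))}"

definition That1 :: "('q1, 'f, 'g) tt \<Rightarrow> ('q2, 'g, 'h) tt \<Rightarrow> ('q1 \<times> 'q2 set, 'f, 'g) tt" where
  "That1 T1 T2 = product T1 (dom_aut T2)"

definition constr_M :: "('q1, 'f, 'g) tt \<Rightarrow> ('q2, 'g, 'h) tt \<Rightarrow>
    (('q1 \<times> 'q2 set) \<times> 'q2, 'f, 'h, ('q1 \<times> 'q2 set) set) latt" where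
  "constr_M T1 T2 = \<lparr>
     lst = {((q, S), q'). q \<in> st T1 \<and> S \<subseteq> st T2 \<and> q' \<in> S},
     linp = inp T1, loutp = outp T2,
     lrl = {(((q, S), q'), a, ls, map_tr id conv_leaf \<zeta>) | q S q' a ls \<xi> \<zeta>.
              ((q, S), a, \<xi>) \<in> rl (That1 T1 T2) \<and> q' \<in> st T2 \<and> translates T2 q' \<xi> \<zeta> \<and>
              q' \<in> S \<and>
              (\<forall>((q'', S''), q''') \<in> fst ` set2_tr (map_tr id conv_leaf \<zeta>). q''' \<in> S'') \<and>
              length ls = snd (inp T1) a \<and>
              (\<forall>i < length ls. ls ! i \<in> st (dom_aut (That1 T1 T2)) \<and> calls \<xi> (Suc i) \<subseteq> ls ! i)},
     lq0 = ((q0 T1, {q0 T2}), q0 T2),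
     la = dom_aut (That1 T1 T2) \<rparr>"

end

theory Submission
  imports Defs
begin


inductive sr :: "('v \<Rightarrow> ('g, 'w) tr \<Rightarrow> bool) \<Rightarrow> ('g, 'v) tr \<Rightarrow> ('g, 'w) tr \<Rightarrow> bool" for A where
  sr_Lf: "A x w \<Longrightarrow> sr A (Lf x) w"
| sr_Nd: "list_all2 (sr A) xs ws \<Longrightarrow> sr A (Nd g xs) (Nd g ws)"

inductive bs :: "('q \<times> 'f \<times> ('g, 'q \<times> nat) tr) set \<Rightarrow>
    ('g, 'q \<times> ('f, 'v) tr) tr \<Rightarrow> ('g, 'q \<times> ('f, 'v) tr) tr \<Rightarrow> bool" for R where
  bs_Nd: "list_all2 (bs R) us ws \<Longrightarrow> bs R (Nd g us) (Nd g ws)"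
| bs_stuck: "bs R (Lf (q, Lf v)) (Lf (q, Lf v))"
| bs_rule: "(q, a, \<xi>) \<in> R \<Longrightarrow> bs R (subst_rhs \<xi> ss) w \<Longrightarrow> bs R (Lf (q, Nd a ss)) w"

lemma bs_Nd_iff: "bs R (Nd g us) W \<longleftrightarrow> (\<exists>ws. W = Nd g ws \<and> list_all2 (bs R) us ws)"
  by (auto elim: bs.cases intro: bs_Nd)

lemma bs_Lf_Lf: "bs R (Lf (q, Lf v)) W \<longleftrightarrow> W = Lf (q, Lf v)"
  by (auto elim: bs.cases intro: bs_stuck)

lemma bs_Lf_Nd: "bs R (Lf (q, Nd a ss)) W \<longleftrightarrow> (\<exists>\<xi>. (q, a, \<xi>) \<in> R \<and> bs R (subst_rhs \<xi> ss) W)"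
  by (auto elim: bs.cases intro: bs_rule)

lemma sr_Lf_iff: "sr A (Lf x) W \<longleftrightarrow> A x W"
  by (auto elim: sr.cases intro: sr_Lf)

lemma sr_Nd_iff: "sr A (Nd g xs) W \<longleftrightarrow> (\<exists>ws. W = Nd g ws \<and> list_all2 (sr A) xs ws)"
  by (auto elim: sr.cases intro: sr_Nd)

lemma derives_ctx: "derives R u u' \<Longrightarrow> derives R (Nd g (ls @ u # rs)) (Nd g (ls @ u' # rs))"
  unfolding derives_def
  by (induction rule: rtranclp_induct) (auto intro: rtranclp.rtrancl_into_rtrancl step.ctx)

lemma derives_trans: "derives R a b \<Longrightarrow> derives R b c \<Longrightarrow> derives R a c"
  unfolding derives_def by auto

lemma derives_list: "list_all2 (derives R) us ws \<Longrightarrow> derives R (Nd g (ls @ us)) (Nd g (ls @ ws))"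
proof (induction arbitrary: ls rule: list_all2_induct)
  case Nil
  then show ?case by (simp add: derives_def)
next
  case (Cons u us w ws)
  have 1: "derives R (Nd g (ls @ u # us)) (Nd g (ls @ w # us))"
    using Cons.hyps(1) by (rule derives_ctx)
  have "derives R (Nd g ((ls @ [w]) @ us)) (Nd g ((ls @ [w]) @ ws))" by (rule Cons.IH)
  then show ?case using 1 by (simp add: derives_trans)
qed

lemma bs_derives: "bs R U W \<Longrightarrow> derives R U W"
proof (induction rule: bs.induct)
  case (bs_Nd us ws g)
  then have "list_all2 (derives R) us ws" by (auto elim: list_all2_mono)
  then show ?case using derives_list[of R us ws g "[]"] by simp
next
  case (bs_stuck q v)
  then show ?case by (simp add: derives_def)
next
  case (bs_rule q a \<xi> ss w)
  then show ?case unfolding derives_def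
    by (auto intro: converse_rtranclp_into_rtranclp step.root)
qed

definition nf :: "('g, 'q \<times> ('f, 'v) tr) tr \<Rightarrow> bool" where
  "nf W \<longleftrightarrow> (\<forall>x \<in> set2_tr W. \<exists>q v. x = (q, Lf v))"

lemma bs_refl: "nf W \<Longrightarrow> bs R W W"
proof (induction W)
  case (Nd g ws)
  then have "\<forall>w\<in>set ws. bs R w w" by (auto simp: nf_def)
  then have "list_all2 (bs R) ws ws" by (auto simp: list_all2_conv_all_nth)
  then show ?case by (rule bs_Nd)
next
  case (Lf x)
  then show ?case by (auto simp: nf_def intro: bs_stuck)
qed

lemma step_bs: "step R U U' \<Longrightarrow> bs R U' W \<Longrightarrow> bs R U W"
proof (induction arbitrary: W rule: step.induct)
  case (root q a \<xi> ss)
  then show ?case by (rule bs_rule)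
next
  case (ctx u u' g ls rs)
  from ctx.prems obtain ws where W: "W = Nd g ws" and l: "list_all2 (bs R) (ls @ u' # rs) ws"
    by (auto simp: bs_Nd_iff)
  from l obtain ws1 ws2 where "ws = ws1 @ ws2" "list_all2 (bs R) ls ws1" "list_all2 (bs R) (u' # rs) ws2"
    by (auto simp: list_all2_append1)
  moreover from this obtain w ws2' where "ws2 = w # ws2'" "bs R u' w" "list_all2 (bs R) rs ws2'"
    by (auto simp: list_all2_Cons1)
  ultimately show ?case using ctx.IH W by (auto intro!: bs_Nd list_all2_appendI)
qed

lemma derives_bs: "derives R U W \<Longrightarrow> nf W \<Longrightarrow> bs R U W"
  unfolding derives_def
  by (induction rule: converse_rtranclp_induct) (auto intro: bs_refl step_bs)

lemma bs_nf: "bs R U W \<Longrightarrow> nf W"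
proof (induction rule: bs.induct)
  case (bs_Nd us ws g)
  then show ?case unfolding nf_def
    by (auto simp: list_all2_conv_all_nth in_set_conv_nth) blast
qed (auto simp: nf_def)

lemma nf_emb: "nf (emb t)"
proof (induction t)
  case (T a ts)
  then show ?case by (auto simp: nf_def)
qed

lemma derives_emb_iff: "derives R U (emb t) \<longleftrightarrow> bs R U (emb t)"
  using nf_emb bs_derives derives_bs by blast

lemma translates_iff: "translates M p \<xi> \<zeta> \<longleftrightarrow> bs (rl M) (Lf (p, \<xi>)) \<zeta>"
  unfolding translates_def
  using bs_derives derives_bs bs_nf unfolding nf_def by fastforce

lemma sr_subst_rhs:
  "bs R (subst_rhs \<xi> ss) W \<longleftrightarrow> sr (\<lambda>(q, i) w. bs R (Lf (q, ss ! (i - 1))) w) \<xi> W"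
proof (induction \<xi> arbitrary: W)
  case (Nd g ts)
  have "list_all2 (bs R) (map (\<lambda>t. subst_rhs t ss) ts) ws \<longleftrightarrow>
        list_all2 (sr (\<lambda>(q, i) w. bs R (Lf (q, ss ! (i - 1))) w)) ts ws" for ws
    using Nd.IH by (auto simp: list_all2_conv_all_nth)
  then show ?case by (simp add: bs_Nd_iff sr_Nd_iff)
next
  case (Lf x)
  then show ?case by (cases x) (simp add: sr_Lf_iff)
qed

lemma sr_set2: "sr A z W \<Longrightarrow> x \<in> set2_tr z \<Longrightarrow> \<exists>w. A x w"
proof (induction rule: sr.induct)
  case (sr_Nd xs ws g)
  then show ?case by (auto simp: list_all2_conv_all_nth in_set_conv_nth)
qed auto

lemma sr_mono: "sr A z W \<Longrightarrow> (\<And>x w. x \<in> set2_tr z \<Longrightarrow> A x w \<Longrightarrow> B x w) \<Longrightarrow> sr B z W"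
proof (induction rule: sr.induct)
  case (sr_Lf x w)
  then show ?case by (auto intro: sr.sr_Lf)
next
  case (sr_Nd xs ws g)
  have "sr B (xs ! i) (ws ! i)" if i: "i < length xs" for i
  proof -
    have m: "xs ! i \<in> set xs" using i by simp
    have "sr A (xs ! i) (ws ! i) \<and> ((\<forall>x. x \<in> set2_tr (xs ! i) \<longrightarrow> (\<forall>w. A x w \<longrightarrow> B x w)) \<longrightarrow> sr B (xs ! i) (ws ! i))"
      using sr_Nd.IH i by (auto simp: list_all2_conv_all_nth)
    then show ?thesis using sr_Nd.prems m by auto
  qed
  then have "list_all2 (sr B) xs ws"
    using sr_Nd.IH by (auto simp: list_all2_conv_all_nth)
  then show ?case by (rule sr.sr_Nd)
qed

lemma sr_map: "sr A (map_tr id f z) W \<longleftrightarrow> sr (\<lambda>x. A (f x)) z W"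
proof (induction z arbitrary: W)
  case (Nd g ts)
  have "list_all2 (sr A) (map (map_tr id f) ts) ws \<longleftrightarrow> list_all2 (sr (\<lambda>x. A (f x))) ts ws" for ws
  proof -
    have "\<And>i W. i < length ts \<Longrightarrow> sr A (map_tr id f (ts ! i)) W = sr (\<lambda>x. A (f x)) (ts ! i) W"
      using Nd.IH[OF nth_mem] by (simp add: id_def)
    then show ?thesis by (auto simp: list_all2_conv_all_nth)
  qed
  moreover have e: "map_tr id f (Nd g ts) = Nd g (map (map_tr id f) ts)" by simp
  ultimately show ?case unfolding e sr_Nd_iff by blast
qed (simp add: sr_Lf_iff)

lemma emb_Nd_iff: "Nd g ws = emb t \<longleftrightarrow> (\<exists>ts. t = T g ts \<and> ws = map emb ts)"
  by (cases t) auto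

lemma sr_emb: "sr A z (emb t) \<Longrightarrow> sr (\<lambda>x w. A x w \<and> (\<exists>u0. w = emb u0)) z (emb t)"
proof (induction z arbitrary: t)
  case (Nd g zs)
  then obtain ts where t: "t = T g ts" and l: "list_all2 (sr A) zs (map emb ts)"
    by (cases t) (auto simp: sr_Nd_iff)
  then have "list_all2 (sr (\<lambda>x w. A x w \<and> (\<exists>u0. w = emb u0))) zs (map emb ts)"
    using Nd.IH by (auto simp: list_all2_conv_all_nth)
  then show ?case using t by (auto intro: sr.sr_Nd)
qed (auto simp: sr_Lf_iff)

fun substg :: "('x \<Rightarrow> 'h tree) \<Rightarrow> ('h, 'x) tr \<Rightarrow> 'h tree" where
  "substg g (Nd a zs) = T a (map (substg g) zs)"
| "substg g (Lf x) = g x"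

lemma sr_substg: "(\<And>x. x \<in> set2_tr z \<Longrightarrow> A x (emb (g x))) \<Longrightarrow> sr A z (emb (substg g z))"
proof (induction z)
  case (Nd a zs)
  then have "list_all2 (sr A) zs (map (\<lambda>z. emb (substg g z)) zs)"
    by (auto simp: list_all2_conv_all_nth) (meson nth_mem)
  then show ?case by (auto intro: sr.sr_Nd simp: comp_def)
qed (auto intro: sr_Lf)

lemma substg_inj: "x \<in> set2_tr z \<Longrightarrow> substg g1 z = substg g2 z \<Longrightarrow> g1 x = g2 x"
proof (induction z)
  case (Nd a zs)
  then show ?case by (auto simp: map_eq_conv)
qed auto

lemma sr_factor:
  "sr A \<rho> W \<Longrightarrow> (\<And>x w. x \<in> set2_tr \<rho> \<Longrightarrow> A x w \<Longrightarrow> \<exists>z. B x z \<and> sr C z w)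
   \<Longrightarrow> \<exists>Z. sr B \<rho> Z \<and> sr C Z W"
proof (induction rule: sr.induct)
  case (sr_Lf x w)
  then obtain z where "B x z" "sr C z w" by fastforce
  then show ?case by (auto intro: sr.sr_Lf)
next
  case (sr_Nd xs ws g)
  have "\<forall>i<length xs. \<exists>z. sr B (xs ! i) z \<and> sr C z (ws ! i)"
  proof (intro allI impI)
    fix i assume i: "i < length xs"
    have m: "xs ! i \<in> set xs" using i by simp
    have "sr A (xs ! i) (ws ! i) \<and> ((\<forall>x. x \<in> set2_tr (xs ! i) \<longrightarrow>
                   (\<forall>w. A x w \<longrightarrow> (\<exists>z. B x z \<and> sr C z w))) \<longrightarrow>
              (\<exists>Z. sr B (xs ! i) Z \<and> sr C Z (ws ! i)))"
      using sr_Nd.IH i by (auto simp: list_all2_conv_all_nth)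
    then show "\<exists>z. sr B (xs ! i) z \<and> sr C z (ws ! i)" using sr_Nd.prems m by auto
  qed
  then obtain zf where zf: "\<forall>i<length xs. sr B (xs ! i) (zf i) \<and> sr C (zf i) (ws ! i)"
    by metis
  let ?zs = "map zf [0..<length xs]"
  have "list_all2 (sr B) xs ?zs" "list_all2 (sr C) ?zs ws"
    using zf sr_Nd.IH by (auto simp: list_all2_conv_all_nth)
  then show ?case by (auto intro: sr.sr_Nd)
qed

fun rkd :: "('f \<Rightarrow> nat) \<Rightarrow> ('f, 'v) tr \<Rightarrow> bool" where
  "rkd rk (Nd a ts) = (length ts = rk a \<and> (\<forall>t\<in>set ts. rkd rk t))"
| "rkd rk (Lf v) = True"

definition rkU :: "('f \<Rightarrow> nat) \<Rightarrow> ('g, 'q \<times> ('f, 'v) tr) tr \<Rightarrow> bool" where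
  "rkU rk U \<longleftrightarrow> (\<forall>(q, w)\<in>set2_tr U. rkd rk w)"

definition idx_ok :: "('q \<times> 'f \<times> ('g, 'q \<times> nat) tr) set \<Rightarrow> ('f \<Rightarrow> nat) \<Rightarrow> bool" where
  "idx_ok R rk \<longleftrightarrow> (\<forall>(q, a, \<xi>)\<in>R. \<forall>(q', i)\<in>set2_tr \<xi>. 1 \<le> i \<and> i \<le> rk a)"

fun substT :: "('v \<Rightarrow> ('f, 'w) tr) \<Rightarrow> ('f, 'v) tr \<Rightarrow> ('f, 'w) tr" where
  "substT \<sigma> (Nd a us) = Nd a (map (substT \<sigma>) us)"
| "substT \<sigma> (Lf v) = \<sigma> v"

fun mapU :: "('v \<Rightarrow> ('f, 'w) tr) \<Rightarrow> ('g, 'q \<times> ('f, 'v) tr) tr \<Rightarrow> ('g, 'q \<times> ('f, 'w) tr) tr" where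
  "mapU \<sigma> (Nd g us) = Nd g (map (mapU \<sigma>) us)"
| "mapU \<sigma> (Lf (p, u)) = Lf (p, substT \<sigma> u)"

lemma set2_subst_rhs: "x \<in> set2_tr (subst_rhs \<xi> ss) \<Longrightarrow> \<exists>q' i. (q', i) \<in> set2_tr \<xi> \<and> x = (q', ss ! (i - 1))"
proof (induction \<xi>)
  case (Nd g ts)
  then obtain t where "t \<in> set ts" "x \<in> set2_tr (subst_rhs t ss)" by auto
  with Nd.IH obtain q' i where "(q', i) \<in> set2_tr t" "x = (q', ss ! (i - 1))" by blast
  then show ?case using \<open>t \<in> set ts\<close> by auto
qed auto

lemma subst_rhs_mapU:
  "(\<And>q' i. (q', i) \<in> set2_tr \<xi> \<Longrightarrow> 1 \<le> i \<and> i \<le> length ss) \<Longrightarrow>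
   subst_rhs \<xi> (map (substT \<sigma>) ss) = mapU \<sigma> (subst_rhs \<xi> ss)"
  by (induction \<xi>) auto

lemma rkU_Nd: "rkU rk (Nd g us) \<longleftrightarrow> (\<forall>u\<in>set us. rkU rk u)"
  by (auto simp: rkU_def)

lemma rkU_subst_rhs:
  assumes "\<And>q' i. (q', i) \<in> set2_tr \<xi> \<Longrightarrow> 1 \<le> i \<and> i \<le> length ss" "\<forall>s\<in>set ss. rkd rk s"
  shows "rkU rk (subst_rhs \<xi> ss)"
  unfolding rkU_def
proof safe
  fix q w assume "(q, w) \<in> set2_tr (subst_rhs \<xi> ss)"
  then obtain q' i where "(q', i) \<in> set2_tr \<xi>" "w = ss ! (i - 1)" using set2_subst_rhs by fastforce
  with assms show "rkd rk w" by force
qed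

lemma bs_comp:
  assumes "bs R U Z" "rkU rk U" "idx_ok R rk"
    "sr (\<lambda>(p, lv) w. \<exists>v. lv = Lf v \<and> bs R (Lf (p, \<sigma> v)) w) Z W"
  shows "bs R (mapU \<sigma> U) W"
  using assms
proof (induction arbitrary: W rule: bs.induct)
  case (bs_Nd us ws g)
  from bs_Nd.prems(3) obtain Ws where W: "W = Nd g Ws"
    and l: "list_all2 (sr (\<lambda>(p, lv) w. \<exists>v. lv = Lf v \<and> bs R (Lf (p, \<sigma> v)) w)) ws Ws"
    by (auto simp: sr_Nd_iff)
  have "list_all2 (bs R) (map (mapU \<sigma>) us) Ws"
    using bs_Nd.IH l bs_Nd.prems(1,2) by (auto simp: list_all2_conv_all_nth rkU_Nd)
  then show ?case using W by (auto intro: bs.bs_Nd)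
next
  case (bs_stuck q v)
  then show ?case by (simp add: sr_Lf_iff)
next
  case (bs_rule q a \<xi> ss w)
  from bs_rule.prems have len: "length ss = rk a" and rs: "\<forall>s\<in>set ss. rkd rk s"
    by (auto simp: rkU_def)
  have idx: "\<And>q' i. (q', i) \<in> set2_tr \<xi> \<Longrightarrow> 1 \<le> i \<and> i \<le> length ss"
    using bs_rule.prems(2) bs_rule.hyps(1) len unfolding idx_ok_def by fastforce
  have rk_sub: "rkU rk (subst_rhs \<xi> ss)" by (rule rkU_subst_rhs) (use idx rs in auto)
  have "bs R (mapU \<sigma> (subst_rhs \<xi> ss)) W"
    using bs_rule.IH rk_sub bs_rule.prems by blast
  moreover have "subst_rhs \<xi> (map (substT \<sigma>) ss) = mapU \<sigma> (subst_rhs \<xi> ss)"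
    by (rule subst_rhs_mapU) (use idx in auto)
  ultimately have "bs R (subst_rhs \<xi> (map (substT \<sigma>) ss)) W" by simp
  then show ?case using bs_rule.hyps(1) by (auto intro: bs.bs_rule)
qed

lemma bs_leafvals:
  assumes "bs R U Z" "rkU rk U" "idx_ok R rk" "(p, Lf x) \<in> set2_tr Z"
  shows "\<exists>q w. (q, w) \<in> set2_tr U \<and> x \<in> set2_tr w"
  using assms
proof (induction rule: bs.induct)
  case (bs_Nd us ws g)
  from bs_Nd.prems(3) obtain w0 where w0: "w0 \<in> set ws" "(p, Lf x) \<in> set2_tr w0" by auto
  then obtain i where i: "i < length ws" "w0 = ws ! i" by (auto simp: in_set_conv_nth)
  have len: "length us = length ws" using bs_Nd.IH by (simp add: list_all2_lengthD)
  have "us ! i \<in> set us" using i len by simp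
  then have rk: "rkU rk (us ! i)" using bs_Nd.prems(1) by (simp add: rkU_Nd)
  have "bs R (us ! i) (ws ! i) \<and> (rkU rk (us ! i) \<longrightarrow> idx_ok R rk \<longrightarrow> (p, Lf x) \<in> set2_tr (ws ! i) \<longrightarrow>
          (\<exists>q w. (q, w) \<in> set2_tr (us ! i) \<and> x \<in> set2_tr w))"
    using bs_Nd.IH i by (auto simp: list_all2_conv_all_nth)
  then obtain q w where "(q, w) \<in> set2_tr (us ! i)" "x \<in> set2_tr w"
    using rk bs_Nd.prems(2) w0 i by blast
  then show ?case using \<open>us ! i \<in> set us\<close> by auto
next
  case (bs_stuck q v)
  then show ?case by auto
next
  case (bs_rule q a \<xi> ss w)
  from bs_rule.prems have len: "length ss = rk a" and rs: "\<forall>s\<in>set ss. rkd rk s"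
    by (auto simp: rkU_def)
  have idx: "\<And>q' i. (q', i) \<in> set2_tr \<xi> \<Longrightarrow> 1 \<le> i \<and> i \<le> length ss"
    using bs_rule.prems(2) bs_rule.hyps(1) len unfolding idx_ok_def by fastforce
  have rk_sub: "rkU rk (subst_rhs \<xi> ss)" by (rule rkU_subst_rhs) (use idx rs in auto)
  obtain q'' w' where "(q'', w') \<in> set2_tr (subst_rhs \<xi> ss)" "x \<in> set2_tr w'"
    using bs_rule.IH rk_sub bs_rule.prems by blast
  then obtain q' i where "(q', i) \<in> set2_tr \<xi>" "w' = ss ! (i - 1)" "x \<in> set2_tr w'"
    using set2_subst_rhs by fastforce
  with idx have "w' \<in> set ss" by force
  then show ?case using \<open>x \<in> set2_tr w'\<close> by auto
qed

fun wfo :: "'g ralph \<Rightarrow> ('g, 'v) tr \<Rightarrow> bool" where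
  "wfo D (Nd g ws) = (g \<in> fst D \<and> length ws = snd D g \<and> (\<forall>w\<in>set ws. wfo D w))"
| "wfo D (Lf v) = True"

definition inwf :: "'f ralph \<Rightarrow> ('g, 'q \<times> ('f, 'v) tr) tr \<Rightarrow> bool" where
  "inwf A U \<longleftrightarrow> (\<forall>(q, w)\<in>set2_tr U. \<exists>s0. w = emb s0 \<and> wt A s0)"

definition rule_ok :: "('q, 'f, 'g) tt \<Rightarrow> bool" where
  "rule_ok M \<longleftrightarrow> (\<forall>(q, a, \<xi>)\<in>rl M. rhs_wf (outp M) (st M) (snd (inp M) a) \<xi>)"

lemma tdtt_rule_ok: "tdtt M \<Longrightarrow> rule_ok M"
  by (auto simp: tdtt_def rule_ok_def)

lemma rhs_wf_leaves: "rhs_wf D Q k \<xi> \<Longrightarrow> (q, i) \<in> set2_tr \<xi> \<Longrightarrow> q \<in> Q \<and> 1 \<le> i \<and> i \<le> k"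
  by (induction \<xi>) auto

lemma rhs_wf_rkd: "rhs_wf D Q k \<xi> \<Longrightarrow> rkd (snd D) \<xi>"
  by (induction \<xi>) auto

lemma rhs_wf_wfo: "rhs_wf D Q k \<xi> \<Longrightarrow> wfo D (subst_rhs \<xi> ss)"
  by (induction \<xi>) auto

lemma rule_ok_idx: "rule_ok M \<Longrightarrow> idx_ok (rl M) (snd (inp M))"
  unfolding rule_ok_def idx_ok_def using rhs_wf_leaves by fastforce

lemma wt_rkd: "wt A s \<Longrightarrow> rkd (snd A) (emb s)"
  by (induction s) auto

lemma rkU_Lf: "rkU rk (Lf (q, w)) \<longleftrightarrow> rkd rk w"
  by (simp add: rkU_def)

lemma wfo_emb: "wfo D (emb t) \<longleftrightarrow> wt D t"
  by (induction t) auto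

lemma bs_wfo:
  assumes "bs (rl M) U W" "rule_ok M" "inwf (inp M) U" "wfo (outp M) U"
  shows "wfo (outp M) W"
  using assms
proof (induction rule: bs.induct)
  case (bs_Nd us ws g)
  have len: "length us = length ws" using bs_Nd.IH by (simp add: list_all2_lengthD)
  have "wfo (outp M) (ws ! i)" if i: "i < length ws" for i
  proof -
    have m: "us ! i \<in> set us" using i len by simp
    have "bs (rl M) (us ! i) (ws ! i) \<and> (rule_ok M \<longrightarrow> inwf (inp M) (us ! i) \<longrightarrow> wfo (outp M) (us ! i) \<longrightarrow> wfo (outp M) (ws ! i))"
      using bs_Nd.IH i by (auto simp: list_all2_conv_all_nth)
    moreover have "inwf (inp M) (us ! i)" using bs_Nd.prems(2) m by (force simp: inwf_def)
    moreover have "wfo (outp M) (us ! i)" using bs_Nd.prems(3) m by simp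
    ultimately show ?thesis using bs_Nd.prems(1) by blast
  qed
  then show ?case using bs_Nd.prems(3) len by (auto simp: in_set_conv_nth)
next
  case (bs_stuck q v)
  then show ?case by simp
next
  case (bs_rule q a \<xi> ss w)
  from bs_rule.prems obtain s0 where s0: "Nd a ss = emb s0" "wt (inp M) s0"
    by (auto simp: inwf_def)
  then obtain ss0 where ss: "s0 = T a ss0" "ss = map emb ss0" by (cases s0) auto
  have rw: "rhs_wf (outp M) (st M) (snd (inp M) a) \<xi>"
    using bs_rule.hyps(1) bs_rule.prems(1) by (auto simp: rule_ok_def)
  have "inwf (inp M) (subst_rhs \<xi> ss)"
    unfolding inwf_def
  proof safe
    fix q' w' assume "(q', w') \<in> set2_tr (subst_rhs \<xi> ss)"
    then obtain q'' i where "(q'', i) \<in> set2_tr \<xi>" "(q', w') = (q'', ss ! (i - 1))"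
      using set2_subst_rhs by blast
    moreover have "1 \<le> i \<and> i \<le> snd (inp M) a" using rhs_wf_leaves[OF rw] \<open>(q'', i) \<in> set2_tr \<xi>\<close> by blast
    moreover have "length ss0 = snd (inp M) a" "\<forall>x\<in>set ss0. wt (inp M) x" using s0 ss by auto
    ultimately show "\<exists>s0. w' = emb s0 \<and> wt (inp M) s0"
      using ss by (intro exI[of _ "ss0 ! (i - 1)"]) auto
  qed
  then show ?case using bs_rule.IH bs_rule.prems(1) rhs_wf_wfo[OF rw] by blast
qed

lemma run_wt:
  assumes "bs (rl M) (Lf (q, emb s)) (emb t)" "rule_ok M" "wt (inp M) s"
  shows "wt (outp M) t"
  using bs_wfo[OF assms(1,2)] assms(3) by (auto simp: inwf_def wfo_emb)




abbreviation embu :: "'f tree \<Rightarrow> ('f, unit) tr" where "embu \<equiv> emb"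

lemma domaut_rule:
  assumes "(S, a, \<rho>) \<in> rl (dom_aut M0)"
  shows "a \<in> fst (inp M0) \<and> (\<exists>Si. \<rho> = aut_rhs a (snd (inp M0) a) Si \<and>
     (S = {} \<longrightarrow> (\<forall>i. Si i = {})) \<and>
     (S \<noteq> {} \<longrightarrow> S \<subseteq> st M0 \<and> (\<exists>\<Gamma>. (\<forall>q\<in>S. \<Gamma> q \<noteq> {} \<and> \<Gamma> q \<subseteq> rhs_of M0 q a) \<and>
        (\<forall>i. Si i = (\<Union>q\<in>S. calls_set (\<Gamma> q) i)))))"
  using assms unfolding dom_aut_def by auto

lemma domaut_ruleI:
  "a \<in> fst (inp M0) \<Longrightarrow> S \<noteq> {} \<Longrightarrow> S \<subseteq> st M0 \<Longrightarrow> (\<forall>q\<in>S. \<Gamma> q \<noteq> {} \<and> \<Gamma> q \<subseteq> rhs_of M0 q a) \<Longrightarrow>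
   (\<forall>i. Si i = (\<Union>q\<in>S. calls_set (\<Gamma> q) i)) \<Longrightarrow> (S, a, aut_rhs a (snd (inp M0) a) Si) \<in> rl (dom_aut M0)"
  unfolding dom_aut_def by simp blast

lemma domaut_ruleI0: "a \<in> fst (inp M0) \<Longrightarrow> ({}, a, aut_rhs a (snd (inp M0) a) (\<lambda>_. {})) \<in> rl (dom_aut M0)"
  unfolding dom_aut_def by simp

lemma subst_rhs_aut:
  "subst_rhs (aut_rhs a k Si) xs = Nd a (map (\<lambda>j. Lf (Si (Suc j), xs ! j)) [0..<k])"
proof -
  have "[1..<Suc k] = map Suc [0..<k]" by (simp add: map_Suc_upt)
  then show ?thesis by (simp add: aut_rhs_def)
qed

lemma bs_aut:
  "bs R (Nd a (map (\<lambda>j. Lf (Si (Suc j), xs ! j)) [0..<k])) W \<longleftrightarrow>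
   (\<exists>ws. W = Nd a ws \<and> length ws = k \<and> (\<forall>j<k. bs R (Lf (Si (Suc j), xs ! j)) (ws ! j)))"
  by (auto simp: bs_Nd_iff list_all2_conv_all_nth)

lemma rule_ok_rhs: "rule_ok M \<Longrightarrow> (q, a, \<xi>) \<in> rl M \<Longrightarrow> rhs_wf (outp M) (st M) (snd (inp M) a) \<xi>"
  by (auto simp: rule_ok_def)

lemma calls_iff: "q \<in> calls \<xi> i \<longleftrightarrow> (q, i) \<in> set2_tr \<xi>"
  by (simp add: calls_def)

lemma da_sound:
  assumes "rule_ok M0" "wt (inp M0) s" "bs (rl (dom_aut M0)) (Lf (S, embu s)) W" "q \<in> S"
  shows "\<exists>o'. bs (rl M0) (Lf (q, embu s)) (emb o')"
  using assms
proof (induction s arbitrary: S W q)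
  case (T a ss)
  let ?k = "snd (inp M0) a"
  have wts: "a \<in> fst (inp M0)" "length ss = ?k" "\<forall>s\<in>set ss. wt (inp M0) s" using T.prems by auto
  from T.prems(3) obtain \<rho> where r: "(S, a, \<rho>) \<in> rl (dom_aut M0)"
    and b: "bs (rl (dom_aut M0)) (subst_rhs \<rho> (map embu ss)) W"
    by (auto simp: bs_Lf_Nd)
  have Sne: "S \<noteq> {}" using T.prems(4) by auto
  obtain Si \<Gamma> where \<rho>: "\<rho> = aut_rhs a ?k Si"
    and \<Gamma>: "\<forall>q\<in>S. \<Gamma> q \<noteq> {} \<and> \<Gamma> q \<subseteq> rhs_of M0 q a" and Si: "\<forall>i. Si i = (\<Union>q\<in>S. calls_set (\<Gamma> q) i)"
    using domaut_rule[OF r] Sne by auto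
  from b obtain ws where ws: "\<forall>j<?k. bs (rl (dom_aut M0)) (Lf (Si (Suc j), map embu ss ! j)) (ws ! j)"
    unfolding \<rho> subst_rhs_aut bs_aut by blast
  have IH: "\<exists>o'. bs (rl M0) (Lf (q'', embu (ss ! j))) (emb o')" if "j < ?k" "q'' \<in> Si (Suc j)" for j q''
  proof -
    have "ss ! j \<in> set ss" using that wts by simp
    then show ?thesis using T.IH[of "ss ! j" "Si (Suc j)" "ws ! j" q''] T.prems(1) wts ws that by auto
  qed
  obtain \<rho>' where \<rho>': "\<rho>' \<in> \<Gamma> q" using \<Gamma> T.prems(4) by blast
  then have rl': "(q, a, \<rho>') \<in> rl M0" using \<Gamma> T.prems(4) by (auto simp: rhs_of_def)
  have rw: "rhs_wf (outp M0) (st M0) ?k \<rho>'" using rule_ok_rhs[OF T.prems(1) rl'] .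
  define oc where "oc = (\<lambda>(q'', i). SOME o'. bs (rl M0) (Lf (q'', embu (ss ! (i - 1)))) (emb o'))"
  have "sr (\<lambda>(q, i) w. bs (rl M0) (Lf (q, map embu ss ! (i - 1))) w) \<rho>' (emb (substg oc \<rho>'))"
  proof (rule sr_substg)
    fix x assume x: "x \<in> set2_tr \<rho>'"
    obtain q'' i where xe: "x = (q'', i)" by (cases x)
    have i: "1 \<le> i" "i \<le> ?k" using rhs_wf_leaves[OF rw] x xe by auto
    have "q'' \<in> Si (Suc (i - 1))" using Si \<rho>' T.prems(4) x xe i by (auto simp: calls_set_def calls_iff)
    then have "\<exists>o'. bs (rl M0) (Lf (q'', embu (ss ! (i - 1)))) (emb o')" using IH[of "i - 1" q''] i by auto
    then have "bs (rl M0) (Lf (q'', embu (ss ! (i - 1)))) (emb (oc x))"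
      unfolding oc_def xe by (auto intro: someI_ex)
    then show "(\<lambda>(q, i) w. bs (rl M0) (Lf (q, map embu ss ! (i - 1))) w) x (emb (oc x))"
      using xe i wts by auto
  qed
  then have "bs (rl M0) (subst_rhs \<rho>' (map embu ss)) (emb (substg oc \<rho>'))" by (simp add: sr_subst_rhs)
  then show ?case using rl' by (auto intro: bs_rule)
qed

lemma da_complete:
  assumes "rule_ok M0" "wt (inp M0) s" "S \<subseteq> st M0" "\<forall>q\<in>S. \<exists>o'. bs (rl M0) (Lf (q, embu s)) (emb o')"
  shows "bs (rl (dom_aut M0)) (Lf (S, embu s)) (emb s)"
  using assms
proof (induction s arbitrary: S)
  case (T a ss)
  let ?k = "snd (inp M0) a"
  have wts: "a \<in> fst (inp M0)" "length ss = ?k" "\<forall>s\<in>set ss. wt (inp M0) s" using T.prems by auto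
  have ex: "\<forall>q\<in>S. \<exists>\<rho>. (q, a, \<rho>) \<in> rl M0 \<and> (\<exists>o'. bs (rl M0) (subst_rhs \<rho> (map embu ss)) (emb o'))"
  proof
    fix q assume "q \<in> S"
    then obtain o' \<xi> where "(q, a, \<xi>) \<in> rl M0" "bs (rl M0) (subst_rhs \<xi> (map embu ss)) (emb o')"
      using T.prems(4) unfolding emb.simps bs_Lf_Nd by blast
    then show "\<exists>\<rho>. (q, a, \<rho>) \<in> rl M0 \<and> (\<exists>o'. bs (rl M0) (subst_rhs \<rho> (map embu ss)) (emb o'))" by blast
  qed
  define rho where "rho = (\<lambda>q. SOME \<rho>. (q, a, \<rho>) \<in> rl M0 \<and> (\<exists>o'. bs (rl M0) (subst_rhs \<rho> (map embu ss)) (emb o')))"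
  have rho: "(q, a, rho q) \<in> rl M0 \<and> (\<exists>o'. bs (rl M0) (subst_rhs (rho q) (map embu ss)) (emb o'))" if "q \<in> S" for q
  proof -
    from ex that have "\<exists>\<rho>. (q, a, \<rho>) \<in> rl M0 \<and> (\<exists>o'. bs (rl M0) (subst_rhs \<rho> (map embu ss)) (emb o'))" by blast
    then show ?thesis unfolding rho_def by (rule someI_ex)
  qed
  define Si where "Si = (\<lambda>i. \<Union>q\<in>S. calls_set {rho q} i)"
  have rule: "(S, a, aut_rhs a ?k Si) \<in> rl (dom_aut M0)"
  proof (cases "S = {}")
    case True
    then have "Si = (\<lambda>_. {})" by (simp add: Si_def)
    then show ?thesis using True wts domaut_ruleI0[of a M0] by simp
  next
    case False
    have "\<forall>q\<in>S. {rho q} \<noteq> {} \<and> {rho q} \<subseteq> rhs_of M0 q a" using rho by (auto simp: rhs_of_def)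
    then show ?thesis using False wts T.prems(3) domaut_ruleI[of a M0 S "\<lambda>q. {rho q}" Si]
      unfolding Si_def by blast
  qed
  have child: "bs (rl (dom_aut M0)) (Lf (Si (Suc j), embu (ss ! j))) (emb (ss ! j))" if j: "j < ?k" for j
  proof -
    have m: "ss ! j \<in> set ss" using j wts by simp
    have sub: "Si (Suc j) \<subseteq> st M0"
    proof
      fix q'' assume "q'' \<in> Si (Suc j)"
      then obtain q where q: "q \<in> S" "(q'', Suc j) \<in> set2_tr (rho q)" by (auto simp: Si_def calls_set_def calls_iff)
      have "(q, a, rho q) \<in> rl M0" using rho[OF q(1)] by blast
      from rhs_wf_leaves[OF rule_ok_rhs[OF T.prems(1) this] q(2)] show "q'' \<in> st M0" by blast
    qed
    have outs: "\<forall>q''\<in>Si (Suc j). \<exists>o'. bs (rl M0) (Lf (q'', embu (ss ! j))) (emb o')"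
    proof
      fix q'' assume "q'' \<in> Si (Suc j)"
      then obtain q where q: "q \<in> S" "(q'', Suc j) \<in> set2_tr (rho q)" by (auto simp: Si_def calls_set_def calls_iff)
      then obtain o' where "bs (rl M0) (subst_rhs (rho q) (map embu ss)) (emb o')" using rho by blast
      then have "sr (\<lambda>(q, i) w. bs (rl M0) (Lf (q, map embu ss ! (i - 1))) w) (rho q) (emb o')"
        by (simp add: sr_subst_rhs)
      from sr_set2[OF sr_emb[OF this] q(2)] show "\<exists>o'. bs (rl M0) (Lf (q'', embu (ss ! j))) (emb o')"
        using j wts by auto
    qed
    show ?thesis using T.IH[OF m T.prems(1)] sub outs wts m by auto
  qed
  have "bs (rl (dom_aut M0)) (subst_rhs (aut_rhs a ?k Si) (map embu ss)) (emb (T a ss))"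
    unfolding subst_rhs_aut bs_aut using child wts by auto
  then show ?case using rule by (auto intro: bs_rule)
qed




definition conv :: "('h, 'p \<times> ('g, 'q \<times> nat) tr) tr \<Rightarrow> ('h, ('q \<times> 'p) \<times> nat) tr" where
  "conv = map_tr id conv_leaf"

lemma conv_Nd[simp]: "conv (Nd g zs) = Nd g (map conv zs)"
  by (simp add: conv_def)

lemma conv_Lf[simp]: "conv (Lf x) = Lf (conv_leaf x)"
  by (simp add: conv_def)

fun strip :: "('g, 's \<times> ('g, 'v) tr) tr \<Rightarrow> ('g, 'v) tr" where
  "strip (Nd g zs) = Nd g (map strip zs)"
| "strip (Lf (S, lv)) = lv"

lemma emb_inj: "emb s = emb t \<Longrightarrow> s = t"
proof (induction s arbitrary: t)
  case (T a ss)
  then show ?case by (cases t) (auto simp: list_eq_iff_nth_eq)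
qed

lemma domaut_Si:
  assumes "rule_ok M0" "(S, a, \<rho>) \<in> rl (dom_aut M0)" "S \<subseteq> st M0"
  shows "\<exists>Si. \<rho> = aut_rhs a (snd (inp M0) a) Si \<and> (\<forall>i. Si i \<subseteq> st M0) \<and> a \<in> fst (inp M0)"
proof (cases "S = {}")
  case True
  then show ?thesis using domaut_rule[OF assms(2)] by auto
next
  case False
  obtain Si \<Gamma> where \<rho>: "\<rho> = aut_rhs a (snd (inp M0) a) Si" "a \<in> fst (inp M0)"
    and \<Gamma>: "\<forall>q\<in>S. \<Gamma> q \<noteq> {} \<and> \<Gamma> q \<subseteq> rhs_of M0 q a" and Si: "\<forall>i. Si i = (\<Union>q\<in>S. calls_set (\<Gamma> q) i)"
    using domaut_rule[OF assms(2)] False by auto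
  have "Si i \<subseteq> st M0" for i
  proof
    fix q'' assume "q'' \<in> Si i"
    then obtain q \<xi> where q: "q \<in> S" "\<xi> \<in> \<Gamma> q" "(q'', i) \<in> set2_tr \<xi>"
      using Si by (auto simp: calls_set_def calls_iff)
    then have "(q, a, \<xi>) \<in> rl M0" using \<Gamma> by (auto simp: rhs_of_def)
    from rhs_wf_leaves[OF rule_ok_rhs[OF assms(1) this] q(3)] show "q'' \<in> st M0" by blast
  qed
  then show ?thesis using \<rho> by blast
qed

lemma dt_shape:
  assumes "rule_ok M0" "rkd (snd (inp M0)) \<xi>" "bs (rl (dom_aut M0)) (Lf (S, \<xi>)) \<zeta>1" "S \<subseteq> st M0"
  shows "strip \<zeta>1 = \<xi> \<and> (\<forall>(S'', lv)\<in>set2_tr \<zeta>1. S'' \<subseteq> st M0 \<and> (\<exists>v. lv = Lf v))"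
  using assms(2-)
proof (induction \<xi> arbitrary: S \<zeta>1)
  case (Nd g \<xi>s)
  let ?k = "snd (inp M0) g"
  from Nd.prems(2) obtain \<rho> where r: "(S, g, \<rho>) \<in> rl (dom_aut M0)"
    and b: "bs (rl (dom_aut M0)) (subst_rhs \<rho> \<xi>s) \<zeta>1" by (auto simp: bs_Lf_Nd)
  obtain Si where \<rho>: "\<rho> = aut_rhs g ?k Si" and Si: "\<forall>i. Si i \<subseteq> st M0"
    using domaut_Si[OF assms(1) r Nd.prems(3)] by blast
  have len: "length \<xi>s = ?k" using Nd.prems(1) by simp
  from b obtain ws where ws: "\<zeta>1 = Nd g ws" "length ws = ?k"
    "\<forall>j<?k. bs (rl (dom_aut M0)) (Lf (Si (Suc j), \<xi>s ! j)) (ws ! j)"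
    unfolding \<rho> subst_rhs_aut bs_aut by blast
  have IH: "strip (ws ! j) = \<xi>s ! j \<and> (\<forall>(S'', lv)\<in>set2_tr (ws ! j). S'' \<subseteq> st M0 \<and> (\<exists>v. lv = Lf v))"
    if j: "j < ?k" for j
  proof -
    have m: "\<xi>s ! j \<in> set \<xi>s" using j len by simp
    then have "rkd (snd (inp M0)) (\<xi>s ! j)" using Nd.prems(1) by simp
    then show ?thesis using Nd.IH[OF m] ws(3) j Si by blast
  qed
  have "map strip ws = \<xi>s" using IH ws(2) len by (auto intro: nth_equalityI)
  moreover have "\<forall>(S'', lv)\<in>set2_tr \<zeta>1. S'' \<subseteq> st M0 \<and> (\<exists>v. lv = Lf v)"
  proof
    fix x assume "x \<in> set2_tr \<zeta>1"
    then obtain w where "w \<in> set ws" "x \<in> set2_tr w" using ws(1) by auto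
    then obtain j where j: "j < length ws" and xj: "x \<in> set2_tr (ws ! j)" by (auto simp: in_set_conv_nth)
    have h: "\<forall>(S'', lv)\<in>set2_tr (ws ! j). S'' \<subseteq> st M0 \<and> (\<exists>v. lv = Lf v)" using IH j ws(2) by simp
    show "case x of (S'', lv) \<Rightarrow> S'' \<subseteq> st M0 \<and> (\<exists>v. lv = Lf v)" using bspec[OF h xj] .
  qed
  ultimately show ?case using ws(1) by simp
next
  case (Lf v)
  then show ?case by (simp add: bs_Lf_Lf)
qed

lemma sr_conv_strip:
  assumes "\<forall>(S'', lv)\<in>set2_tr \<zeta>1. \<exists>v. lv = Lf v" "sr A (conv \<zeta>1) W"
  shows "sr (\<lambda>(q'', i) w. \<exists>S''. A ((q'', S''), i) w) (strip \<zeta>1) W"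
  using assms
proof (induction \<zeta>1 arbitrary: W)
  case (Nd g zs)
  from Nd.prems(2) obtain Ws where W: "W = Nd g Ws" "list_all2 (sr A) (map conv zs) Ws"
    by (auto simp: sr_Nd_iff)
  have "list_all2 (sr (\<lambda>(q'', i) w. \<exists>S''. A ((q'', S''), i) w)) (map strip zs) Ws"
    using W(2) Nd.IH Nd.prems(1) by (auto simp: list_all2_conv_all_nth)
  then show ?case using W(1) by (auto intro: sr_Nd)
next
  case (Lf x)
  obtain S'' lv where x: "x = (S'', lv)" by (cases x)
  then obtain q'' i where "lv = Lf (q'', i)" using Lf.prems(1) by auto
  then show ?case using Lf.prems(2) x by (auto simp: sr_Lf_iff)
qed

lemma rhs_wf_conv:
  assumes "rhs_wf D Q k (strip \<zeta>1)" "\<forall>(S'', lv)\<in>set2_tr \<zeta>1. S'' \<subseteq> Q2 \<and> (\<exists>v. lv = Lf v)"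
  shows "rhs_wf D (Q \<times> Pow Q2) k (conv \<zeta>1)"
  using assms
proof (induction \<zeta>1)
  case (Nd g zs)
  then show ?case by auto
next
  case (Lf x)
  obtain S'' lv where x: "x = (S'', lv)" by (cases x)
  then obtain q'' i where "lv = Lf (q'', i)" using Lf.prems(2) by auto
  then show ?case using Lf.prems x by auto
qed

lemma ts_inner:
  assumes "rkd (snd (inp M0)) \<xi>" "bs (rl (dom_aut M0)) (Lf (S, \<xi>)) \<zeta>1"
    "sr A (conv \<zeta>1) (emb t)"
    "\<And>q'' S'' i w. A ((q'', S''), i) w \<Longrightarrow> \<exists>u0. w = emb u0 \<and> bs (rl (dom_aut M0)) (Lf (S'', embu u0)) (emb u0)"
  shows "bs (rl (dom_aut M0)) (Lf (S, embu t)) (emb t)"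
  using assms(1-3)
proof (induction \<xi> arbitrary: S \<zeta>1 t)
  case (Nd g \<xi>s)
  let ?k = "snd (inp M0) g"
  from Nd.prems(2) obtain \<rho> where r: "(S, g, \<rho>) \<in> rl (dom_aut M0)"
    and b: "bs (rl (dom_aut M0)) (subst_rhs \<rho> \<xi>s) \<zeta>1" by (auto simp: bs_Lf_Nd)
  obtain Si where \<rho>: "\<rho> = aut_rhs g ?k Si" using domaut_rule[OF r] by blast
  have len: "length \<xi>s = ?k" using Nd.prems(1) by simp
  from b obtain ws where ws: "\<zeta>1 = Nd g ws" "length ws = ?k"
    "\<forall>j<?k. bs (rl (dom_aut M0)) (Lf (Si (Suc j), \<xi>s ! j)) (ws ! j)"
    unfolding \<rho> subst_rhs_aut bs_aut by blast
  from Nd.prems(3) ws(1) obtain Ws where Ws: "emb t = Nd g Ws" "list_all2 (sr A) (map conv ws) Ws"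
    by (auto simp: sr_Nd_iff)
  then obtain ts where ts: "t = T g ts" "Ws = map emb ts" by (metis emb_Nd_iff)
  have lts: "length ts = ?k" using Ws(2) ts ws(2) by (metis length_map list_all2_lengthD)
  have IH: "bs (rl (dom_aut M0)) (Lf (Si (Suc j), embu (ts ! j))) (emb (ts ! j))" if j: "j < ?k" for j
  proof -
    have m: "\<xi>s ! j \<in> set \<xi>s" using j len by simp
    then have "rkd (snd (inp M0)) (\<xi>s ! j)" using Nd.prems(1) by simp
    moreover have "sr A (conv (ws ! j)) (emb (ts ! j))"
      using Ws(2) ts j ws(2) by (auto simp: list_all2_conv_all_nth)
    ultimately show ?thesis using Nd.IH[OF m] ws(3) j by blast
  qed
  have "bs (rl (dom_aut M0)) (subst_rhs \<rho> (map embu ts)) (emb t)"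
    unfolding \<rho> subst_rhs_aut bs_aut using IH lts ts by auto
  then show ?case using r ts by (auto intro: bs_rule)
next
  case (Lf v)
  then have "\<zeta>1 = Lf (S, Lf v)" by (simp add: bs_Lf_Lf)
  moreover obtain q'' i where "v = (q'', i)" by (cases v)
  ultimately have "A ((q'', S), i) (emb t)" using Lf.prems(3) by (simp add: sr_Lf_iff)
  then show ?case using assms(4) emb_inj by blast
qed




lemma domaut_st: "st (dom_aut M) = Pow (st M)"
  by (simp add: dom_aut_def)

lemma domaut_inp: "inp (dom_aut M) = inp M" and domaut_outp: "outp (dom_aut M) = inp M"
  by (simp_all add: dom_aut_def)

lemma sr_retype:
  "sr A z (emb t :: ('g, 'a) tr) \<Longrightarrow>
   (\<And>x u0. x \<in> set2_tr z \<Longrightarrow> A x (emb u0 :: ('g, 'a) tr) \<Longrightarrow> B x (emb u0 :: ('g, 'b) tr)) \<Longrightarrow>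
   sr B z (emb t :: ('g, 'b) tr)"
proof (induction z arbitrary: t)
  case (Nd g zs)
  then obtain ts where t: "t = T g ts" and l: "list_all2 (sr A) zs (map emb ts)"
    by (cases t) (auto simp: sr_Nd_iff)
  have "sr B (zs ! i) (emb (ts ! i))" if i: "i < length zs" for i
  proof -
    have m: "zs ! i \<in> set zs" using i by simp
    have "sr A (zs ! i) (emb (ts ! i))" using l i by (auto simp: list_all2_conv_all_nth)
    moreover have "\<And>x u0. x \<in> set2_tr (zs ! i) \<Longrightarrow> A x (emb u0) \<Longrightarrow> B x (emb u0)"
      using Nd.prems(2) m t by auto
    ultimately show ?thesis using Nd.IH[OF m] by blast
  qed
  then have "list_all2 (sr B) zs (map emb ts)"
    using l by (auto simp: list_all2_conv_all_nth)
  then show ?case using t by (auto intro: sr_Nd)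
qed (auto simp: sr_Lf_iff)

locale cs =
  fixes T1 :: "('q1, 'f, 'g) tt" and T2 :: "('q2, 'g, 'h) tt"
  assumes t1: "tdtt T1" and t2: "tdtt T2" and io: "outp T1 = inp T2"
begin

abbreviation H where "H \<equiv> That1 T1 T2"
abbreviation DA where "DA \<equiv> dom_aut T2"

abbreviation run1 :: "'q1 \<Rightarrow> 'f tree \<Rightarrow> 'g tree \<Rightarrow> bool" where
  "run1 q s t \<equiv> bs (rl T1) (Lf (q, embu s)) (emb t)"
abbreviation run2 :: "'q2 \<Rightarrow> 'g tree \<Rightarrow> 'h tree \<Rightarrow> bool" where
  "run2 q s t \<equiv> bs (rl T2) (Lf (q, embu s)) (emb t)"
abbreviation runH :: "'q1 \<times> 'q2 set \<Rightarrow> 'f tree \<Rightarrow> 'g tree \<Rightarrow> bool" where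
  "runH q s t \<equiv> bs (rl H) (Lf (q, embu s)) (emb t)"

lemma ok1: "rule_ok T1" using t1 by (rule tdtt_rule_ok)
lemma ok2: "rule_ok T2" using t2 by (rule tdtt_rule_ok)

lemma H_st: "st H = st T1 \<times> Pow (st T2)"
  by (simp add: That1_def product_def domaut_st)
lemma H_inp: "inp H = inp T1"
  by (simp add: That1_def product_def)
lemma H_outp: "outp H = inp T2"
  by (simp add: That1_def product_def domaut_outp)
lemma H_q0: "q0 H = (q0 T1, {q0 T2})"
  by (simp add: That1_def product_def dom_aut_def)

lemma H_rl: "((q, S), a, \<eta>) \<in> rl H \<longleftrightarrow>
  (\<exists>\<xi> \<zeta>1. \<eta> = conv \<zeta>1 \<and> (q, a, \<xi>) \<in> rl T1 \<and> S \<subseteq> st T2 \<and> bs (rl DA) (Lf (S, \<xi>)) \<zeta>1)"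
  unfolding That1_def product_def conv_def by (auto simp: translates_iff domaut_st)

lemma T1_rkd: "(q, a, \<xi>) \<in> rl T1 \<Longrightarrow> rkd (snd (inp T2)) \<xi>"
  using rhs_wf_rkd[OF rule_ok_rhs[OF ok1]] io by metis

lemma H_rule_shape:
  assumes "(q, a, \<xi>) \<in> rl T1" "S \<subseteq> st T2" "bs (rl DA) (Lf (S, \<xi>)) \<zeta>1"
  shows "strip \<zeta>1 = \<xi> \<and> (\<forall>(S'', lv)\<in>set2_tr \<zeta>1. S'' \<subseteq> st T2 \<and> (\<exists>v. lv = Lf v))"
  using dt_shape[OF ok2 _ assms(3,2)] T1_rkd[OF assms(1)] by (simp add: domaut_inp)

lemma okH: "rule_ok H"
  unfolding rule_ok_def
proof (intro ballI)
  fix r assume r: "r \<in> rl H"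
  obtain q S a \<eta> where re: "r = ((q, S), a, \<eta>)" by (metis prod.exhaust)
  then obtain \<xi> \<zeta>1 where h: "\<eta> = conv \<zeta>1" "(q, a, \<xi>) \<in> rl T1" "S \<subseteq> st T2" "bs (rl DA) (Lf (S, \<xi>)) \<zeta>1"
    using r H_rl by blast
  have sh: "strip \<zeta>1 = \<xi>" "\<forall>(S'', lv)\<in>set2_tr \<zeta>1. S'' \<subseteq> st T2 \<and> (\<exists>v. lv = Lf v)"
    using H_rule_shape[OF h(2-4)] by auto
  have "rhs_wf (outp T1) (st T1) (snd (inp T1) a) (strip \<zeta>1)"
    using rule_ok_rhs[OF ok1 h(2)] sh(1) by simp
  from rhs_wf_conv[OF this sh(2)] show "case r of (q, a, \<xi>) \<Rightarrow> rhs_wf (outp H) (st H) (snd (inp H) a) \<xi>"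
    using re h(1) by (simp add: H_st H_inp H_outp io)
qed

lemma proj: "runH (q, S) s t \<Longrightarrow> wt (inp T1) s \<Longrightarrow> run1 q s t"
proof (induction s arbitrary: q S t)
  case (T a ss)
  have wts: "a \<in> fst (inp T1)" "length ss = snd (inp T1) a" "\<forall>s\<in>set ss. wt (inp T1) s" using T.prems by auto
  from T.prems(1) obtain \<eta> where r: "((q, S), a, \<eta>) \<in> rl H"
    and b: "bs (rl H) (subst_rhs \<eta> (map embu ss)) (emb t)" by (auto simp: bs_Lf_Nd)
  obtain \<xi> \<zeta>1 where h: "\<eta> = conv \<zeta>1" "(q, a, \<xi>) \<in> rl T1" "S \<subseteq> st T2" "bs (rl DA) (Lf (S, \<xi>)) \<zeta>1"
    using r H_rl by blast
  have sh: "strip \<zeta>1 = \<xi>" "\<forall>(S'', lv)\<in>set2_tr \<zeta>1. S'' \<subseteq> st T2 \<and> (\<exists>v. lv = Lf v)"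
    using H_rule_shape[OF h(2-4)] by auto
  have rw: "rhs_wf (outp T1) (st T1) (snd (inp T1) a) \<xi>" using rule_ok_rhs[OF ok1 h(2)] .
  from b have s1: "sr (\<lambda>(P, i) w. bs (rl H) (Lf (P, map embu ss ! (i - 1))) w) (conv \<zeta>1) (emb t)"
    by (simp add: sr_subst_rhs h(1))
  have lf: "\<forall>(S'', lv)\<in>set2_tr \<zeta>1. \<exists>v. lv = Lf v"
  proof
    fix x assume "x \<in> set2_tr \<zeta>1"
    from bspec[OF sh(2) this] show "case x of (S'', lv) \<Rightarrow> \<exists>v. lv = Lf v" by (cases x) simp
  qed
  have
    "sr (\<lambda>(q'', i) w. \<exists>S''. bs (rl H) (Lf ((q'', S''), map embu ss ! (i - 1))) w) \<xi> (emb t)"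
    using sr_conv_strip[OF lf s1] unfolding sh(1) by simp
  then have
    "sr (\<lambda>(q'', i) w. bs (rl T1) (Lf (q'', map embu ss ! (i - 1))) w) \<xi> (emb t)"
  proof (rule sr_retype)
    fix x u0 assume x: "x \<in> set2_tr \<xi>" and
      A: "(case x of (q'', i) \<Rightarrow> \<lambda>w. \<exists>S''. bs (rl H) (Lf ((q'', S''), map embu ss ! (i - 1))) w) (emb u0)"
    obtain q'' i where xe: "x = (q'', i)" by (cases x)
    have i: "1 \<le> i" "i \<le> length ss" using rhs_wf_leaves[OF rw] x xe wts by auto
    then have m: "ss ! (i - 1) \<in> set ss" by simp
    obtain S'' where w: "runH (q'', S'') (ss ! (i - 1)) u0" using A xe i by auto
    have "run1 q'' (ss ! (i - 1)) u0" using T.IH[OF m w] wts m by blast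
    then show "(case x of (q'', i) \<Rightarrow> \<lambda>w. bs (rl T1) (Lf (q'', map embu ss ! (i - 1))) w) (emb u0)"
      using xe i by auto
  qed
  then have "bs (rl T1) (subst_rhs \<xi> (map embu ss)) (emb t)" by (simp add: sr_subst_rhs)
  then show ?case using h(2) by (auto intro: bs_rule)
qed

lemma H_sound: "runH (q, S) s t \<Longrightarrow> wt (inp T1) s \<Longrightarrow> bs (rl DA) (Lf (S, embu t)) (emb t)"
proof (induction s arbitrary: q S t)
  case (T a ss)
  have wts: "a \<in> fst (inp T1)" "length ss = snd (inp T1) a" "\<forall>s\<in>set ss. wt (inp T1) s" using T.prems by auto
  from T.prems(1) obtain \<eta> where r: "((q, S), a, \<eta>) \<in> rl H"
    and b: "bs (rl H) (subst_rhs \<eta> (map embu ss)) (emb t)" by (auto simp: bs_Lf_Nd)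
  obtain \<xi> \<zeta>1 where h: "\<eta> = conv \<zeta>1" "(q, a, \<xi>) \<in> rl T1" "S \<subseteq> st T2" "bs (rl DA) (Lf (S, \<xi>)) \<zeta>1"
    using r H_rl by blast
  have rwH: "rhs_wf (outp H) (st H) (snd (inp H) a) (conv \<zeta>1)" using rule_ok_rhs[OF okH r] h(1) by simp
  from b have s1: "sr (\<lambda>(P, i) w. bs (rl H) (Lf (P, map embu ss ! (i - 1))) w) (conv \<zeta>1) (emb t)"
    by (simp add: sr_subst_rhs h(1))
  define A2 where "A2 = (\<lambda>x w. x \<in> set2_tr (conv \<zeta>1) \<and>
     (case x of (P, i) \<Rightarrow> \<lambda>w. bs (rl H) (Lf (P, map embu ss ! (i - 1))) w) w \<and> (\<exists>u0. w = emb u0))"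
  from sr_emb[OF s1] have s2: "sr A2 (conv \<zeta>1) (emb t)"
    by (rule sr_mono) (auto simp: A2_def)
  have hyp: "\<exists>u0. w = emb u0 \<and> bs (rl DA) (Lf (S'', embu u0)) (emb u0)" if A: "A2 ((q'', S''), i) w" for q'' S'' i w
  proof -
    have i: "1 \<le> i" "i \<le> length ss" using rhs_wf_leaves[OF rwH] A wts by (auto simp: H_inp A2_def)
    then have m: "ss ! (i - 1) \<in> set ss" by simp
    obtain u0 where w: "w = emb u0" "runH (q'', S'') (ss ! (i - 1)) u0" using A i by (auto simp: A2_def)
    show ?thesis using T.IH[OF m w(2)] wts m w(1) by blast
  qed
  have rk: "rkd (snd (inp T2)) \<xi>" by (rule T1_rkd[OF h(2)])
  show ?case by (rule ts_inner[OF rk h(4) s2 hyp])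
qed

end




lemma rhs_wf_wfo': "rhs_wf D Q k \<xi> \<Longrightarrow> wfo D \<xi>"
  by (induction \<xi>) auto

context cs
begin

definition ivt :: "'q2 set \<Rightarrow> 'g tree \<Rightarrow> bool" where
  "ivt S t \<longleftrightarrow> S \<subseteq> st T2 \<and> (\<forall>p\<in>S. \<exists>o'. run2 p t o')"

definition Lc1 :: "('q1 \<times> nat \<Rightarrow> ('g, 'q1 \<times> ('f, unit) tr) tr \<Rightarrow> bool) \<Rightarrow>
    ('q1 \<times> 'q2 set) \<times> nat \<Rightarrow> ('g, 'q1 \<times> ('f, unit) tr) tr \<Rightarrow> bool" where
  "Lc1 Q = (\<lambda>((q'', S''), i) w. \<exists>t'. w = emb t' \<and> Q (q'', i) w \<and> ivt S'' t')"

definition Lc2 :: "('q1 \<times> nat \<Rightarrow> ('g, 'q1 \<times> ('f, unit) tr) tr \<Rightarrow> bool) \<Rightarrow>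
    'q2 \<times> ('g, ('q1 \<times> 'q2 set) \<times> nat) tr \<Rightarrow> ('h, 'w) tr \<Rightarrow> bool" where
  "Lc2 Q = (\<lambda>(p', lv) w. \<exists>q'' S'' i t' o'. lv = Lf ((q'', S''), i) \<and> p' \<in> S'' \<and> ivt S'' t' \<and>
      Q (q'', i) (emb t') \<and> run2 p' t' o' \<and> w = emb o')"

lemma run2_calls:
  assumes "bs (rl T2) (subst_rhs \<rho> (map embu ts)) (emb o')" "(q'', i) \<in> set2_tr \<rho>" "1 \<le> i" "i \<le> length ts"
  shows "\<exists>o''. run2 q'' (ts ! (i - 1)) o''"
proof -
  from assms(1) have "sr (\<lambda>(q, i) w. bs (rl T2) (Lf (q, map embu ts ! (i - 1))) w) \<rho> (emb o')"
    by (simp add: sr_subst_rhs)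
  from sr_set2[OF sr_emb[OF this] assms(2)] show ?thesis using assms(3,4) by auto
qed

lemma J:
  assumes "wfo (inp T2) \<xi>" "sr Q \<xi> (emb t)" "ivt S t"
  shows "\<exists>\<zeta>1. bs (rl DA) (Lf (S, \<xi>)) \<zeta>1 \<and> sr (Lc1 Q) (conv \<zeta>1) (emb t) \<and>
     (\<forall>p\<in>S. \<forall>o'. run2 p t o' \<longrightarrow>
        (\<exists>\<zeta>. bs (rl T2) (Lf (p, conv \<zeta>1)) \<zeta> \<and> sr (Lc2 Q) \<zeta> (emb o' :: ('h, 'w) tr)))"
  using assms
proof (induction \<xi> arbitrary: S t)
  case (Lf x)
  obtain q'' i where x: "x = (q'', i)" by (cases x)
  have Q: "Q (q'', i) (emb t)" using Lf.prems(2) x by (simp add: sr_Lf_iff)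
  let ?z = "Lf (S, Lf x) :: ('g, 'q2 set \<times> ('g, 'q1 \<times> nat) tr) tr"
  have "bs (rl DA) (Lf (S, Lf x)) ?z" by (rule bs_stuck)
  moreover have "sr (Lc1 Q) (conv ?z) (emb t)"
    using Q x Lf.prems(3) by (auto simp: Lc1_def intro!: sr_Lf)
  moreover have "\<exists>\<zeta>. bs (rl T2) (Lf (p, conv ?z)) \<zeta> \<and> sr (Lc2 Q) \<zeta> (emb o' :: ('h, 'w) tr)"
    if "p \<in> S" "run2 p t o'" for p o'
  proof -
    have "bs (rl T2) (Lf (p, conv ?z)) (Lf (p, Lf ((q'', S), i)))" using x by (simp add: bs_stuck)
    moreover have "sr (Lc2 Q) (Lf (p, Lf ((q'', S), i))) (emb o' :: ('h, 'w) tr)"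
      using that Q Lf.prems(3) by (auto simp: Lc2_def intro!: sr_Lf) blast
    ultimately show ?thesis by blast
  qed
  ultimately show ?case by blast
next
  case (Nd g \<xi>s)
  let ?k = "snd (inp T2) g"
  have g: "g \<in> fst (inp T2)" "length \<xi>s = ?k" "\<forall>x\<in>set \<xi>s. wfo (inp T2) x" using Nd.prems(1) by auto
  from Nd.prems(2) obtain ts where t: "t = T g ts" and l: "list_all2 (sr Q) \<xi>s (map emb ts)"
    by (cases t) (auto simp: sr_Nd_iff)
  have lts: "length ts = ?k" using l g by (metis length_map list_all2_lengthD)
  define V where "V = (\<lambda>p. {\<rho>. (p, g, \<rho>) \<in> rl T2 \<and> (\<exists>o'. bs (rl T2) (subst_rhs \<rho> (map embu ts)) (emb o' :: ('h, 'q2 \<times> ('g, unit) tr) tr))})"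
  define Si where "Si = (\<lambda>i. \<Union>p\<in>S. calls_set (V p) i)"
  have run_V: "\<rho> \<in> V p" if "bs (rl T2) (Lf (p, embu t)) (emb o')" "(p, g, \<rho>) \<in> rl T2"
     "bs (rl T2) (subst_rhs \<rho> (map embu ts)) (emb o')" for p \<rho> o'
    using that unfolding V_def by blast
  have Vne: "V p \<noteq> {}" if pS: "p \<in> S" for p
  proof -
    obtain o' where "run2 p t o'" using Nd.prems(3) pS by (auto simp: ivt_def)
    then obtain \<rho> where "(p, g, \<rho>) \<in> rl T2" "bs (rl T2) (subst_rhs \<rho> (map embu ts)) (emb o')"
      unfolding t emb.simps bs_Lf_Nd by blast
    then show ?thesis unfolding V_def by blast
  qed
  have rule: "(S, g, aut_rhs g ?k Si) \<in> rl DA"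
  proof (cases "S = {}")
    case True
    then have "Si = (\<lambda>_. {})" by (simp add: Si_def)
    then show ?thesis using True g domaut_ruleI0[of g T2] by simp
  next
    case False
    have "\<forall>p\<in>S. V p \<noteq> {} \<and> V p \<subseteq> rhs_of T2 p g" using Vne by (auto simp: rhs_of_def V_def)
    moreover have "S \<subseteq> st T2" using Nd.prems(3) by (simp add: ivt_def)
    ultimately show ?thesis using False g domaut_ruleI[of g T2 S V Si]
      unfolding Si_def by blast
  qed
  have civt: "ivt (Si (Suc j)) (ts ! j)" if j: "j < ?k" for j
    unfolding ivt_def
  proof (intro conjI ballI subsetI)
    fix q'' assume "q'' \<in> Si (Suc j)"
    then obtain p \<rho> where p: "p \<in> S" "\<rho> \<in> V p" "(q'', Suc j) \<in> set2_tr \<rho>"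
      by (auto simp: Si_def calls_set_def calls_iff)
    then have r: "(p, g, \<rho>) \<in> rl T2" by (simp add: V_def)
    from rhs_wf_leaves[OF rule_ok_rhs[OF ok2 r] p(3)] show "q'' \<in> st T2" by blast
  next
    fix q'' assume "q'' \<in> Si (Suc j)"
    then obtain p \<rho> where p: "p \<in> S" "\<rho> \<in> V p" "(q'', Suc j) \<in> set2_tr \<rho>"
      by (auto simp: Si_def calls_set_def calls_iff)
    then obtain o' where "bs (rl T2) (subst_rhs \<rho> (map embu ts)) (emb o')" by (auto simp: V_def)
    from run2_calls[OF this p(3)] j lts show "\<exists>o'. run2 q'' (ts ! j) o'" by auto
  qed
  have IH: "\<exists>\<zeta>1. bs (rl DA) (Lf (Si (Suc j), \<xi>s ! j)) \<zeta>1 \<and> sr (Lc1 Q) (conv \<zeta>1) (emb (ts ! j)) \<and>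
     (\<forall>p\<in>Si (Suc j). \<forall>o'. run2 p (ts ! j) o' \<longrightarrow>
        (\<exists>\<zeta>. bs (rl T2) (Lf (p, conv \<zeta>1)) \<zeta> \<and> sr (Lc2 Q) \<zeta> (emb o' :: ('h, 'w) tr)))" if j: "j < ?k" for j
  proof -
    have m: "\<xi>s ! j \<in> set \<xi>s" using j g by simp
    have "sr Q (\<xi>s ! j) (emb (ts ! j))" using l j lts by (auto simp: list_all2_conv_all_nth)
    then show ?thesis using Nd.IH[OF m] g(3) m civt[OF j] by blast
  qed
  define Z where "Z = (\<lambda>j. SOME \<zeta>1. bs (rl DA) (Lf (Si (Suc j), \<xi>s ! j)) \<zeta>1 \<and> sr (Lc1 Q) (conv \<zeta>1) (emb (ts ! j)) \<and>
     (\<forall>p\<in>Si (Suc j). \<forall>o'. run2 p (ts ! j) o' \<longrightarrow>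
        (\<exists>\<zeta>. bs (rl T2) (Lf (p, conv \<zeta>1)) \<zeta> \<and> sr (Lc2 Q) \<zeta> (emb o' :: ('h, 'w) tr))))"
  have Z: "bs (rl DA) (Lf (Si (Suc j), \<xi>s ! j)) (Z j) \<and> sr (Lc1 Q) (conv (Z j)) (emb (ts ! j)) \<and>
     (\<forall>p\<in>Si (Suc j). \<forall>o'. run2 p (ts ! j) o' \<longrightarrow>
        (\<exists>\<zeta>. bs (rl T2) (Lf (p, conv (Z j))) \<zeta> \<and> sr (Lc2 Q) \<zeta> (emb o' :: ('h, 'w) tr)))" if j: "j < ?k" for j
    using someI_ex[OF IH[OF j]] unfolding Z_def .
  define z1 where "z1 = Nd g (map Z [0..<?k])"
  have "bs (rl DA) (subst_rhs (aut_rhs g ?k Si) \<xi>s) z1"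
    unfolding subst_rhs_aut bs_aut z1_def using Z by auto
  then have B1: "bs (rl DA) (Lf (S, Nd g \<xi>s)) z1" using rule by (auto intro: bs_rule)
  have B2: "sr (Lc1 Q) (conv z1) (emb t)"
    unfolding z1_def t using Z lts by (auto intro!: sr_Nd simp: list_all2_conv_all_nth)
  have B3: "\<exists>\<zeta>. bs (rl T2) (Lf (p, conv z1)) \<zeta> \<and> sr (Lc2 Q) \<zeta> (emb o' :: ('h, 'w) tr)"
    if p: "p \<in> S" and r: "run2 p t o'" for p o'
  proof -
    from r obtain \<rho> where r\<rho>: "(p, g, \<rho>) \<in> rl T2" and b\<rho>: "bs (rl T2) (subst_rhs \<rho> (map embu ts)) (emb o')"
      unfolding t emb.simps bs_Lf_Nd by blast
    have \<rho>V: "\<rho> \<in> V p" unfolding V_def using r\<rho> b\<rho> by blast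
    have rw: "rhs_wf (outp T2) (st T2) ?k \<rho>" using rule_ok_rhs[OF ok2 r\<rho>] .
    let ?cs = "map (\<lambda>j. conv (Z j)) [0..<?k]"
    from b\<rho> have "sr (\<lambda>(q, i) w. bs (rl T2) (Lf (q, map embu ts ! (i - 1))) w) \<rho> (emb o')"
      by (simp add: sr_subst_rhs)
    then have s: "sr (\<lambda>(q, i) w. \<exists>u0. w = emb u0 \<and> run2 q (ts ! (i - 1)) u0) \<rho> (emb o' :: ('h, 'w) tr)"
    proof (rule sr_retype)
      fix x u0 assume x: "x \<in> set2_tr \<rho>"
        and A: "(case x of (q, i) \<Rightarrow> \<lambda>w. bs (rl T2) (Lf (q, map embu ts ! (i - 1))) w) (emb u0)"
      obtain q'' i where xe: "x = (q'', i)" by (cases x)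
      have i: "1 \<le> i" "i \<le> ?k" using rhs_wf_leaves[OF rw] x xe by auto
      show "(case x of (q, i) \<Rightarrow> \<lambda>w. \<exists>u0. w = emb u0 \<and> run2 q (ts ! (i - 1)) u0) (emb u0 :: ('h, 'w) tr)"
        using A xe i lts by auto
    qed
    have "\<exists>Z'. sr (\<lambda>(q, i) z. bs (rl T2) (Lf (q, ?cs ! (i - 1))) z) \<rho> Z' \<and> sr (Lc2 Q) Z' (emb o' :: ('h, 'w) tr)"
    proof (rule sr_factor[OF s])
      fix x w assume x: "x \<in> set2_tr \<rho>" and
        A: "(case x of (q, i) \<Rightarrow> \<lambda>w. \<exists>u0. w = emb u0 \<and> run2 q (ts ! (i - 1)) u0) (w :: ('h, 'w) tr)"
      obtain q'' i where xe: "x = (q'', i)" by (cases x)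
      have i: "1 \<le> i" "i \<le> ?k" using rhs_wf_leaves[OF rw] x xe by auto
      obtain u0 where u0: "w = emb u0" "run2 q'' (ts ! (i - 1)) u0" using A xe by auto
      have "q'' \<in> Si (Suc (i - 1))" using i p \<rho>V x xe by (auto simp: Si_def calls_set_def calls_iff)
      then obtain \<zeta> where "bs (rl T2) (Lf (q'', conv (Z (i - 1)))) \<zeta>" "sr (Lc2 Q) \<zeta> (emb u0 :: ('h, 'w) tr)"
        using Z[of "i - 1"] i u0(2) by fastforce
      then show "\<exists>z. (case x of (q, i) \<Rightarrow> \<lambda>z. bs (rl T2) (Lf (q, ?cs ! (i - 1))) z) z \<and> sr (Lc2 Q) z w"
        using xe i u0(1) by auto
    qed
    then obtain Z' where Z': "sr (\<lambda>(q, i) z. bs (rl T2) (Lf (q, ?cs ! (i - 1))) z) \<rho> Z'"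
      "sr (Lc2 Q) Z' (emb o' :: ('h, 'w) tr)" by blast
    from Z'(1) have "bs (rl T2) (subst_rhs \<rho> ?cs) Z'" by (simp add: sr_subst_rhs)
    then have "bs (rl T2) (Lf (p, conv z1)) Z'" using r\<rho> unfolding z1_def by (auto intro: bs_rule simp: comp_def)
    then show ?thesis using Z'(2) by blast
  qed
  show ?case using B1 B2 B3 unfolding z1_def by blast
qed

end




lemma set2_conv: "set2_tr (conv z) = conv_leaf ` set2_tr z"
  by (simp add: conv_def tr.set_map)

context cs
begin

abbreviation MM where "MM \<equiv> constr_M T1 T2"
abbreviation runM :: "(('q1 \<times> 'q2 set) \<times> 'q2) \<Rightarrow> ('f \<times> ('q1 \<times> 'q2 set) set list) tree \<Rightarrow> 'h tree \<Rightarrow> bool" where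
  "runM Q s r \<equiv> bs (la_rules MM) (Lf (Q, embu s)) (emb r)"

lemma wfo_T1: "(q, a, \<xi>) \<in> rl T1 \<Longrightarrow> wfo (inp T2) \<xi>"
  using rhs_wf_wfo'[OF rule_ok_rhs[OF ok1]] io by metis

lemma H_complete: "run1 q s t \<Longrightarrow> wt (inp T1) s \<Longrightarrow> ivt S t \<Longrightarrow> runH (q, S) s t"
proof (induction s arbitrary: q S t)
  case (T a ss)
  have wts: "a \<in> fst (inp T1)" "length ss = snd (inp T1) a" "\<forall>s\<in>set ss. wt (inp T1) s" using T.prems by auto
  from T.prems(1) obtain \<xi> where r: "(q, a, \<xi>) \<in> rl T1"
    and b: "bs (rl T1) (subst_rhs \<xi> (map embu ss)) (emb t)" by (auto simp: bs_Lf_Nd)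
  define Q where "Q = (\<lambda>(q'', i) w. bs (rl T1) (Lf (q'', map embu ss ! (i - 1))) w)"
  from b have sQ: "sr Q \<xi> (emb t)" by (simp add: sr_subst_rhs Q_def)
  obtain \<zeta>1 where z: "bs (rl DA) (Lf (S, \<xi>)) \<zeta>1" "sr (Lc1 Q) (conv \<zeta>1) (emb t)"
    using J[OF wfo_T1[OF r] sQ T.prems(3)] by blast
  have rH: "((q, S), a, conv \<zeta>1) \<in> rl H" using H_rl r z(1) T.prems(3) by (auto simp: ivt_def)
  have rwH: "rhs_wf (outp H) (st H) (snd (inp H) a) (conv \<zeta>1)" using rule_ok_rhs[OF okH rH] .
  from z(2) have "sr (\<lambda>(P, i) w. bs (rl H) (Lf (P, map embu ss ! (i - 1))) w) (conv \<zeta>1) (emb t)"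
  proof (rule sr_retype)
    fix x u0 assume x: "x \<in> set2_tr (conv \<zeta>1)" and A: "Lc1 Q x (emb u0)"
    obtain q'' S'' i where xe: "x = ((q'', S''), i)" by (metis prod.exhaust)
    have i: "1 \<le> i" "i \<le> length ss" using rhs_wf_leaves[OF rwH] x xe wts by (auto simp: H_inp)
    then have m: "ss ! (i - 1) \<in> set ss" by simp
    from A xe have t': "Q (q'', i) (emb u0)" "ivt S'' u0" by (auto simp: Lc1_def dest: emb_inj)
    have "run1 q'' (ss ! (i - 1)) u0" using t'(1) i by (simp add: Q_def)
    then have "runH (q'', S'') (ss ! (i - 1)) u0" using T.IH[OF m] wts m t'(2) by blast
    then show "(case x of (P, i) \<Rightarrow> \<lambda>w. bs (rl H) (Lf (P, map embu ss ! (i - 1))) w) (emb u0)"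
      using xe i by simp
  qed
  then have "bs (rl H) (subst_rhs (conv \<zeta>1) (map embu ss)) (emb t)" by (simp add: sr_subst_rhs)
  then show ?case using rH by (auto intro: bs_rule)
qed

definition lab :: "'f tree \<Rightarrow> ('q1 \<times> 'q2 set) set" where
  "lab s = {P \<in> st H. \<exists>o'. runH P s o'}"

fun canon :: "'f tree \<Rightarrow> ('f \<times> ('q1 \<times> 'q2 set) set list) tree" where
  "canon (T a ss) = T (a, map lab ss) (map canon ss)"

lemma lab_dom: "wt (inp T1) s \<Longrightarrow> s \<in> tdom (dom_aut H) (lab s)"
proof -
  assume w: "wt (inp T1) s"
  have "bs (rl (dom_aut H)) (Lf (lab s, embu s)) (emb s)"
    by (rule da_complete[OF okH]) (use w in \<open>auto simp: H_inp lab_def\<close>)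
  then show ?thesis using w unfolding tdom_def
    by (auto simp: derives_emb_iff domaut_inp domaut_outp H_inp trees_def)
qed

lemma canon_relabel: "wt (inp T1) s \<Longrightarrow> relabel (dom_aut H) s (canon s)"
proof (induction s)
  case (T a ss)
  have "\<forall>i<length ss. map lab ss ! i \<in> st (dom_aut H) \<and> ss ! i \<in> tdom (dom_aut H) (map lab ss ! i) \<and>
     relabel (dom_aut H) (ss ! i) (map canon ss ! i)"
  proof (intro allI impI conjI)
    fix i assume i: "i < length ss"
    then have m: "ss ! i \<in> set ss" by simp
    then have w: "wt (inp T1) (ss ! i)" using T.prems by auto
    show "map lab ss ! i \<in> st (dom_aut H)" using i by (auto simp: domaut_st lab_def)
    show "ss ! i \<in> tdom (dom_aut H) (map lab ss ! i)" using i lab_dom[OF w] by simp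
    show "relabel (dom_aut H) (ss ! i) (map canon ss ! i)" using i T.IH[OF m w] by simp
  qed
  then show ?case by (auto intro: relabel.intros)
qed

lemma M_rule_intro:
  assumes "((q, S), a, \<eta>) \<in> rl H" "q' \<in> st T2" "bs (rl T2) (Lf (q', \<eta>)) \<zeta>" "q' \<in> S"
    "\<forall>x\<in>set2_tr \<zeta>. \<exists>p' q'' S'' i. x = (p', Lf ((q'', S''), i)) \<and> p' \<in> S''"
    "length ls = snd (inp T1) a" "\<forall>i<length ls. ls ! i \<in> st (dom_aut H) \<and> calls \<eta> (Suc i) \<subseteq> ls ! i"
  shows "(((q, S), q'), (a, ls), conv \<zeta>) \<in> la_rules MM"
proof -
  have lc: "\<forall>((q'', S''), q''')\<in>fst ` set2_tr (map_tr id conv_leaf \<zeta>). q''' \<in> S''"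
    using assms(5) by (fastforce simp: tr.set_map)
  have tr: "translates T2 q' \<eta> \<zeta>" using assms(3) by (simp add: translates_iff)
  show ?thesis unfolding la_rules_def constr_M_def conv_def
    using assms(1,2,4,6,7) tr lc unfolding That1_def by auto
qed

end




lemma sr_conv: "sr A (conv z) W \<longleftrightarrow> sr (\<lambda>x. A (conv_leaf x)) z W"
  unfolding conv_def by (rule sr_map)

context cs
begin

lemma rkd_H: "((q, S), a, \<eta>) \<in> rl H \<Longrightarrow> rkd (snd (inp T2)) \<eta>"
  using rhs_wf_rkd[OF rule_ok_rhs[OF okH]] H_outp by metis

lemma leaf_in_eta:
  assumes "((q, S), a, \<eta>) \<in> rl H" "bs (rl T2) (Lf (q', \<eta>)) \<zeta>" "(p', Lf x) \<in> set2_tr \<zeta>"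
  shows "x \<in> set2_tr \<eta>"
proof -
  have "rkU (snd (inp T2)) (Lf (q', \<eta>))" using rkd_H[OF assms(1)] by (simp add: rkU_Lf)
  from bs_leafvals[OF assms(2) this rule_ok_idx[OF ok2] assms(3)] show ?thesis by auto
qed

lemma MC: "run1 q s t \<Longrightarrow> wt (inp T1) s \<Longrightarrow> ivt S t \<Longrightarrow> q' \<in> S \<Longrightarrow> run2 q' t r \<Longrightarrow>
  runM ((q, S), q') (canon s) r"
proof (induction s arbitrary: q S q' t r)
  case (T a ss)
  have wts: "a \<in> fst (inp T1)" "length ss = snd (inp T1) a" "\<forall>s\<in>set ss. wt (inp T1) s" using T.prems by auto
  from T.prems(1) obtain \<xi> where r: "(q, a, \<xi>) \<in> rl T1"
    and b: "bs (rl T1) (subst_rhs \<xi> (map embu ss)) (emb t)" by (auto simp: bs_Lf_Nd)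
  define Q where "Q = (\<lambda>(q'', i) w. bs (rl T1) (Lf (q'', map embu ss ! (i - 1))) w)"
  from b have sQ: "sr Q \<xi> (emb t)" by (simp add: sr_subst_rhs Q_def)
  obtain \<zeta>1 where z: "bs (rl DA) (Lf (S, \<xi>)) \<zeta>1" "sr (Lc1 Q) (conv \<zeta>1) (emb t)"
    "\<forall>p\<in>S. \<forall>o'. run2 p t o' \<longrightarrow> (\<exists>\<zeta>. bs (rl T2) (Lf (p, conv \<zeta>1)) \<zeta> \<and>
        sr (Lc2 Q) \<zeta> (emb o' :: ('h, (('q1 \<times> 'q2 set) \<times> 'q2) \<times> ('f \<times> ('q1 \<times> 'q2 set) set list, unit) tr) tr))"
    using J[OF wfo_T1[OF r] sQ T.prems(3)] by blast
  obtain \<zeta> where \<zeta>: "bs (rl T2) (Lf (q', conv \<zeta>1)) \<zeta>"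
    "sr (Lc2 Q) \<zeta> (emb r :: ('h, (('q1 \<times> 'q2 set) \<times> 'q2) \<times> ('f \<times> ('q1 \<times> 'q2 set) set list, unit) tr) tr)"
    using z(3) T.prems(4,5) by blast
  have rH: "((q, S), a, conv \<zeta>1) \<in> rl H" using H_rl r z(1) T.prems(3) by (auto simp: ivt_def)
  have rwH: "rhs_wf (outp H) (st H) (snd (inp H) a) (conv \<zeta>1)" using rule_ok_rhs[OF okH rH] .
  have q'st: "q' \<in> st T2" using T.prems(3,4) by (auto simp: ivt_def)
  have leafs: "\<forall>x\<in>set2_tr \<zeta>. \<exists>p' q'' S'' i. x = (p', Lf ((q'', S''), i)) \<and> p' \<in> S''"
  proof
    fix x assume "x \<in> set2_tr \<zeta>"
    from sr_set2[OF \<zeta>(2) this] show "\<exists>p' q'' S'' i. x = (p', Lf ((q'', S''), i)) \<and> p' \<in> S''"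
      by (cases x) (auto simp: Lc2_def)
  qed
  have calls: "\<forall>i<length (map lab ss). map lab ss ! i \<in> st (dom_aut H) \<and> calls (conv \<zeta>1) (Suc i) \<subseteq> map lab ss ! i"
  proof (intro allI impI conjI subsetI)
    fix i assume i: "i < length (map lab ss)"
    then show "map lab ss ! i \<in> st (dom_aut H)" by (auto simp: domaut_st lab_def)
    fix P'' assume P: "P'' \<in> calls (conv \<zeta>1) (Suc i)"
    obtain q'' S'' where Pe: "P'' = (q'', S'')" by (cases P'')
    have x: "((q'', S''), Suc i) \<in> set2_tr (conv \<zeta>1)" using P Pe by (simp add: calls_iff)
    from sr_set2[OF z(2) x] obtain w where "Lc1 Q ((q'', S''), Suc i) w" by blast
    then obtain t' where t': "Q (q'', Suc i) (emb t')" "ivt S'' t'" by (auto simp: Lc1_def)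
    have "run1 q'' (ss ! i) t'" using t'(1) i by (simp add: Q_def)
    then have "runH (q'', S'') (ss ! i) t'" using H_complete t'(2) wts i by simp
    moreover have "P'' \<in> st H" using rhs_wf_leaves[OF rwH x] Pe by simp
    ultimately show "P'' \<in> map lab ss ! i" using i Pe by (auto simp: lab_def)
  qed
  have rM: "(((q, S), q'), (a, map lab ss), conv \<zeta>) \<in> la_rules MM"
    by (rule M_rule_intro[OF rH q'st \<zeta>(1) T.prems(4) leafs]) (use wts calls in auto)
  have "sr (\<lambda>x. (\<lambda>(M'', i) w. bs (la_rules MM) (Lf (M'', map embu (map canon ss) ! (i - 1))) w) (conv_leaf x)) \<zeta> (emb r)"
  proof (rule sr_mono[OF \<zeta>(2)])
    fix x and w :: "('h, (('q1 \<times> 'q2 set) \<times> 'q2) \<times> ('f \<times> ('q1 \<times> 'q2 set) set list, unit) tr) tr"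
    assume x: "x \<in> set2_tr \<zeta>" and A: "Lc2 Q x w"
    from A obtain p' q'' S'' i t' o' where xe: "x = (p', Lf ((q'', S''), i))" and
      h: "p' \<in> S''" "ivt S'' t'" "Q (q'', i) (emb t')" "run2 p' t' o'" "w = emb o'"
      by (cases x) (auto simp: Lc2_def)
    have "((q'', S''), i) \<in> set2_tr (conv \<zeta>1)" using leaf_in_eta[OF rH \<zeta>(1)] x xe by blast
    then have i: "1 \<le> i" "i \<le> length ss" using rhs_wf_leaves[OF rwH] wts by (auto simp: H_inp)
    then have m: "ss ! (i - 1) \<in> set ss" by simp
    have "run1 q'' (ss ! (i - 1)) t'" using h(3) i by (simp add: Q_def)
    then have "runM ((q'', S''), p') (canon (ss ! (i - 1))) o'" using T.IH[OF m] wts m h by blast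
    then show "(\<lambda>(M'', i) w. bs (la_rules MM) (Lf (M'', map embu (map canon ss) ! (i - 1))) w) (conv_leaf x) w"
      using xe i h(5) by simp
  qed
  then have "sr (\<lambda>(M'', i) w. bs (la_rules MM) (Lf (M'', map embu (map canon ss) ! (i - 1))) w) (conv \<zeta>) (emb r)"
    by (simp add: sr_conv)
  then have "bs (la_rules MM) (subst_rhs (conv \<zeta>) (map embu (map canon ss))) (emb r)" by (simp add: sr_subst_rhs)
  then show ?case using rM by (auto intro: bs_rule)
qed

end




lemma substT_emb: "substT (\<lambda>v. emb (g v)) z = emb (substg g z)"
  by (induction z) auto

lemma relabel_T_inv:
  assumes "relabel B (T a ss) s'"
  shows "\<exists>ls ss'. s' = T (a, ls) ss' \<and> length ls = length ss \<and> length ss' = length ss \<and>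
    (\<forall>i<length ss. ls ! i \<in> st B \<and> ss ! i \<in> tdom B (ls ! i) \<and> relabel B (ss ! i) (ss' ! i))"
  using assms by (cases rule: relabel.cases) auto

context cs
begin

lemma M_rule_elim:
  assumes "(((q, S), q'), (a, ls), \<rho>) \<in> la_rules MM"
  shows "\<exists>\<zeta> \<eta>. \<rho> = conv \<zeta> \<and> ((q, S), a, \<eta>) \<in> rl H \<and> bs (rl T2) (Lf (q', \<eta>)) \<zeta> \<and>
    (\<forall>((q'', S''), q''')\<in>fst ` set2_tr (conv \<zeta>). q''' \<in> S'') \<and> length ls = snd (inp T1) a \<and>
    (\<forall>i<length ls. calls \<eta> (Suc i) \<subseteq> ls ! i)"
  using assms unfolding la_rules_def constr_M_def conv_def by (auto simp: translates_iff) blast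

lemma H_out_wt: "runH (q, S) s t \<Longrightarrow> wt (inp T1) s \<Longrightarrow> wt (inp T2) t"
  using run_wt[OF proj ok1] io by metis

lemma H_out_T2: "runH (q, S) s t \<Longrightarrow> wt (inp T1) s \<Longrightarrow> p \<in> S \<Longrightarrow> \<exists>o'. run2 p t o'"
  using da_sound[OF ok2 _ H_sound] H_out_wt by blast

lemma tdom_H: "s \<in> tdom (dom_aut H) l \<Longrightarrow> P \<in> l \<Longrightarrow> \<exists>t. runH P s t"
proof -
  assume s: "s \<in> tdom (dom_aut H) l" and P: "P \<in> l"
  from s obtain t where w: "wt (inp T1) s" and d: "bs (rl (dom_aut H)) (Lf (l, embu s)) (emb t)"
    unfolding tdom_def by (auto simp: derives_emb_iff trees_def domaut_inp H_inp)
  show ?thesis using da_sound[OF okH _ d P] w by (simp add: H_inp)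
qed

definition Fun :: "'q1 \<times> 'q2 set \<Rightarrow> 'q2 \<Rightarrow> 'f tree \<Rightarrow> bool" where
  "Fun P q' s \<longleftrightarrow> (\<forall>t1 t2 r1 r2. runH P s t1 \<longrightarrow> run2 q' t1 r1 \<longrightarrow> runH P s t2 \<longrightarrow> run2 q' t2 r2 \<longrightarrow> r1 = r2)"

lemma MS: "wt (inp T1) s \<Longrightarrow> relabel (dom_aut H) s s' \<Longrightarrow> runM ((q, S), q') s' r \<Longrightarrow> Fun (q, S) q' s \<Longrightarrow>
  \<exists>t. runH (q, S) s t \<and> run2 q' t r"
proof (induction s arbitrary: q S q' s' r)
  case (T a ss)
  have wts: "a \<in> fst (inp T1)" "length ss = snd (inp T1) a" "\<forall>s\<in>set ss. wt (inp T1) s" using T.prems by auto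
  obtain ls ss' where s': "s' = T (a, ls) ss'" "length ls = length ss" "length ss' = length ss"
    "\<forall>i<length ss. ls ! i \<in> st (dom_aut H) \<and> ss ! i \<in> tdom (dom_aut H) (ls ! i) \<and> relabel (dom_aut H) (ss ! i) (ss' ! i)"
    using relabel_T_inv[OF T.prems(2)] by blast
  from T.prems(3) s'(1) obtain \<rho> where rM: "(((q, S), q'), (a, ls), \<rho>) \<in> la_rules MM"
    and bM: "bs (la_rules MM) (subst_rhs \<rho> (map embu ss')) (emb r)" by (auto simp: bs_Lf_Nd)
  obtain \<zeta> \<eta> where e: "\<rho> = conv \<zeta>" "((q, S), a, \<eta>) \<in> rl H" "bs (rl T2) (Lf (q', \<eta>)) \<zeta>"
    "\<forall>((q'', S''), q''')\<in>fst ` set2_tr (conv \<zeta>). q''' \<in> S''" "\<forall>i<length ls. calls \<eta> (Suc i) \<subseteq> ls ! i"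
    using M_rule_elim[OF rM] by blast
  have rwH: "rhs_wf (outp H) (st H) (snd (inp H) a) \<eta>" using rule_ok_rhs[OF okH e(2)] .
  have idx: "1 \<le> i \<and> i \<le> length ss" if "(P'', i) \<in> set2_tr \<eta>" for P'' i
    using rhs_wf_leaves[OF rwH that] wts by (simp add: H_inp)
  have exH: "\<exists>t''. runH P'' (ss ! (i - 1)) t''" if x: "(P'', i) \<in> set2_tr \<eta>" for P'' i
  proof -
    have i: "1 \<le> i" "i \<le> length ss" using idx[OF x] by auto
    have si: "Suc (i - 1) = i" using i by simp
    have "i - 1 < length ls" using i s'(2) by simp
    then have c: "calls \<eta> (Suc (i - 1)) \<subseteq> ls ! (i - 1)" using e(5) by blast
    have "(P'', Suc (i - 1)) \<in> set2_tr \<eta>" using x i by simp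
    then have "P'' \<in> ls ! (i - 1)" using c by (auto simp: calls_iff)
    moreover have "ss ! (i - 1) \<in> tdom (dom_aut H) (ls ! (i - 1))"
      using s'(4) i by (metis One_nat_def Suc_pred diff_less lessI less_le_trans zero_less_one le_less_trans)
    ultimately show ?thesis using tdom_H by blast
  qed
  have wchild: "wt (inp T1) (ss ! (i - 1))" if "(P'', i) \<in> set2_tr \<eta>" for P'' i
    using idx[OF that] wts by auto
  have zleaf: "\<exists>p' q'' S'' i. y = (p', Lf ((q'', S''), i)) \<and> ((q'', S''), i) \<in> set2_tr \<eta> \<and> p' \<in> S''"
    if y: "y \<in> set2_tr \<zeta>" for y
  proof -
    have "nf \<zeta>" using bs_nf[OF e(3)] .
    then obtain p' v where ye: "y = (p', Lf v)" using y by (auto simp: nf_def)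
    then have v: "v \<in> set2_tr \<eta>" using leaf_in_eta[OF e(2,3)] y by blast
    obtain q'' S'' i where ve: "v = ((q'', S''), i)" by (metis prod.exhaust)
    have "conv_leaf y \<in> set2_tr (conv \<zeta>)" using y by (simp add: set2_conv)
    then have "p' \<in> S''" using e(4) ye ve by fastforce
    then show ?thesis using ye ve v by blast
  qed
  have genuine: "runH (q, S) (T a ss) (substg tc \<eta>) \<and> bs (rl T2) (Lf (q', embu (substg tc \<eta>))) W"
    if tc: "\<forall>x\<in>set2_tr \<eta>. runH (fst x) (ss ! (snd x - 1)) (tc x)"
      and W: "sr (\<lambda>(p, lv) w. \<exists>v. lv = Lf v \<and> bs (rl T2) (Lf (p, embu (tc v))) w) \<zeta> W" for tc W
  proof
    have "sr (\<lambda>(P, i) w. bs (rl H) (Lf (P, map embu ss ! (i - 1))) w) \<eta> (emb (substg tc \<eta>))"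
    proof (rule sr_substg)
      fix x assume x: "x \<in> set2_tr \<eta>"
      obtain P'' i where xe: "x = (P'', i)" by (cases x)
      show "(\<lambda>(P, i) w. bs (rl H) (Lf (P, map embu ss ! (i - 1))) w) x (emb (tc x))"
        using tc x xe idx[of P'' i] by auto
    qed
    then have "bs (rl H) (subst_rhs \<eta> (map embu ss)) (emb (substg tc \<eta>))" by (simp add: sr_subst_rhs)
    then show "runH (q, S) (T a ss) (substg tc \<eta>)" using e(2) by (auto intro: bs_rule)
  next
    have "rkU (snd (inp T2)) (Lf (q', \<eta>))" using rkd_H[OF e(2)] by (simp add: rkU_Lf)
    from bs_comp[OF e(3) this rule_ok_idx[OF ok2] W]
    show "bs (rl T2) (Lf (q', embu (substg tc \<eta>))) W" by (simp add: substT_emb)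
  qed
  define tc0 where "tc0 = (\<lambda>x. SOME t''. runH (fst x) (ss ! (snd x - 1)) t'')"
  have tc0: "\<forall>x\<in>set2_tr \<eta>. runH (fst x) (ss ! (snd x - 1)) (tc0 x)"
  proof
    fix x assume x: "x \<in> set2_tr \<eta>"
    obtain P'' i where xe: "x = (P'', i)" by (cases x)
    show "runH (fst x) (ss ! (snd x - 1)) (tc0 x)"
      unfolding tc0_def using exH[of P'' i] x xe by (auto intro: someI_ex)
  qed
  have mk: "\<exists>t' oc. runH (q, S) (T a ss) t' \<and> run2 q' t' (substg oc \<zeta>) \<and> oc (p', Lf ((q'', S''), i)) = r0"
    if h: "runH (q'', S'') (ss ! (i - 1)) t0" "run2 p' t0 r0" "(p', Lf ((q'', S''), i)) \<in> set2_tr \<zeta>"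
    for p' q'' S'' i t0 r0
  proof -
    let ?v = "((q'', S''), i)"
    define tc where "tc = tc0(?v := t0)"
    have tcv: "\<forall>x\<in>set2_tr \<eta>. runH (fst x) (ss ! (snd x - 1)) (tc x)"
      using tc0 h(1) by (auto simp: tc_def)
    define oc where "oc = (\<lambda>y. if y = (p', (Lf ?v :: ('g, ('q1 \<times> 'q2 set) \<times> nat) tr)) then r0 else
       (case y of (p, lv) \<Rightarrow> SOME o'. \<exists>v. lv = Lf v \<and> run2 p (tc v) o'))"
    have "sr (\<lambda>(p, lv) w. \<exists>v. lv = Lf v \<and> bs (rl T2) (Lf (p, embu (tc v))) w) \<zeta> (emb (substg oc \<zeta>))"
    proof (rule sr_substg)
      fix y assume y: "y \<in> set2_tr \<zeta>"
      obtain p1 q1 S1 i1 where ye: "y = (p1, Lf ((q1, S1), i1))" "((q1, S1), i1) \<in> set2_tr \<eta>" "p1 \<in> S1"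
        using zleaf[OF y] by blast
      show "(\<lambda>(p, lv) w. \<exists>v. lv = Lf v \<and> bs (rl T2) (Lf (p, embu (tc v))) w) y (emb (oc y))"
      proof (cases "y = (p', Lf ?v)")
        case True
        then show ?thesis using h(2) by (auto simp: oc_def tc_def)
      next
        case False
        have "runH (q1, S1) (ss ! (i1 - 1)) (tc ((q1, S1), i1))" using tcv ye(2) by force
        then obtain o1 where "run2 p1 (tc ((q1, S1), i1)) o1"
          using H_out_T2 wchild[OF ye(2)] ye(3) by blast
        then have "\<exists>o'. \<exists>v. Lf ((q1, S1), i1) = Lf v \<and> run2 p1 (tc v) o'" by blast
        from someI_ex[OF this] show ?thesis using False ye(1) by (auto simp: oc_def)
      qed
    qed
    from genuine[OF tcv this] have g: "runH (q, S) (T a ss) (substg tc \<eta>)" "run2 q' (substg tc \<eta>) (substg oc \<zeta>)"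
      by auto
    have "oc (p', Lf ?v) = r0" unfolding oc_def by simp
    then show ?thesis using g by blast
  qed
  have Funchild: "Fun (q'', S'') p' (ss ! (i - 1))" if y: "(p', Lf ((q'', S''), i)) \<in> set2_tr \<zeta>" for p' q'' S'' i
    unfolding Fun_def
  proof (intro allI impI)
    fix t1 t2 r1 r2
    assume h: "runH (q'', S'') (ss ! (i - 1)) t1" "run2 p' t1 r1" "runH (q'', S'') (ss ! (i - 1)) t2" "run2 p' t2 r2"
    obtain t1' oc1 where 1: "runH (q, S) (T a ss) t1'" "run2 q' t1' (substg oc1 \<zeta>)" "oc1 (p', Lf ((q'', S''), i)) = r1"
      using mk[OF h(1,2) y] by blast
    obtain t2' oc2 where 2: "runH (q, S) (T a ss) t2'" "run2 q' t2' (substg oc2 \<zeta>)" "oc2 (p', Lf ((q'', S''), i)) = r2"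
      using mk[OF h(3,4) y] by blast
    have "substg oc1 \<zeta> = substg oc2 \<zeta>" using T.prems(4) 1 2 unfolding Fun_def by blast
    from substg_inj[OF y this] show "r1 = r2" using 1(3) 2(3) by simp
  qed
  from bM have "sr (\<lambda>(M'', i) w. bs (la_rules MM) (Lf (M'', map embu ss' ! (i - 1))) w) (conv \<zeta>) (emb r)"
    by (simp add: sr_subst_rhs e(1))
  then have "sr (\<lambda>y. (\<lambda>(M'', i) w. bs (la_rules MM) (Lf (M'', map embu ss' ! (i - 1))) w) (conv_leaf y)) \<zeta> (emb r)"
    by (simp add: sr_conv)
  then have W: "sr (\<lambda>(p, lv) w. \<exists>v. lv = Lf v \<and> bs (rl T2) (Lf (p, embu (tc0 v))) w) \<zeta> (emb r)"
  proof (rule sr_retype)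
    fix y u0 assume y: "y \<in> set2_tr \<zeta>"
      and A: "(\<lambda>(M'', i) w. bs (la_rules MM) (Lf (M'', map embu ss' ! (i - 1))) w) (conv_leaf y) (emb u0)"
    obtain p1 q1 S1 i1 where ye: "y = (p1, Lf ((q1, S1), i1))" "((q1, S1), i1) \<in> set2_tr \<eta>" "p1 \<in> S1"
      using zleaf[OF y] by blast
    have i: "1 \<le> i1" "i1 \<le> length ss" using idx[OF ye(2)] by auto
    then have m: "ss ! (i1 - 1) \<in> set ss" by simp
    have iss: "i1 - 1 < length ss" using i by simp
    have rl': "relabel (dom_aut H) (ss ! (i1 - 1)) (ss' ! (i1 - 1))" using s'(4) iss by blast
    have rM': "runM ((q1, S1), p1) (ss' ! (i1 - 1)) u0" using A ye(1) i s'(3) by simp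
    have Fc: "Fun (q1, S1) p1 (ss ! (i1 - 1))" using Funchild y ye(1) by blast
    obtain tt where tt: "runH (q1, S1) (ss ! (i1 - 1)) tt" "run2 p1 tt u0"
      using T.IH[OF m wchild[OF ye(2)] rl' rM' Fc] by blast
    have h0: "runH (q1, S1) (ss ! (i1 - 1)) (tc0 ((q1, S1), i1))" using tc0 ye(2) by force
    then obtain o1 where o1: "run2 p1 (tc0 ((q1, S1), i1)) o1" using H_out_T2 wchild[OF ye(2)] ye(3) by blast
    have "o1 = u0" using Fc h0 o1 tt unfolding Fun_def by blast
    then show "(\<lambda>(p, lv) w. \<exists>v. lv = Lf v \<and> bs (rl T2) (Lf (p, embu (tc0 v))) w) y (emb u0)"
      using o1 ye(1) by simp
  qed
  from genuine[OF tc0 W] show ?case by blast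
qed

end




context cs
begin

lemma MM_fields: "linp MM = inp T1" "loutp MM = outp T2" "la MM = dom_aut H"
  "lq0 MM = ((q0 T1, {q0 T2}), q0 T2)"
  by (simp_all add: constr_M_def)

lemma q02: "q0 T2 \<in> st T2" using t2 by (simp add: tdtt_def)

lemma rel_H_iff: "(s, t) \<in> rel H \<longleftrightarrow> wt (inp T1) s \<and> wt (inp T2) t \<and> runH (q0 T1, {q0 T2}) s t"
  unfolding rel_def trees_def by (auto simp: derives_emb_iff H_inp H_outp H_q0)

lemma rel_T2_iff: "(t, r) \<in> rel T2 \<longleftrightarrow> wt (inp T2) t \<and> wt (outp T2) r \<and> run2 (q0 T2) t r"
  unfolding rel_def trees_def by (auto simp: derives_emb_iff)

lemma la_rel_iff: "(s, r) \<in> la_rel MM \<longleftrightarrow> wt (inp T1) s \<and> wt (outp T2) r \<and>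
   (\<exists>s'. relabel (dom_aut H) s s' \<and> runM ((q0 T1, {q0 T2}), q0 T2) s' r)"
  unfolding la_rel_def trees_def by (auto simp: derives_emb_iff MM_fields)

lemma C_sub: "(s, r) \<in> rel H O rel T2 \<Longrightarrow> (s, r) \<in> la_rel MM"
proof -
  assume "(s, r) \<in> rel H O rel T2"
  then obtain t where h: "wt (inp T1) s" "runH (q0 T1, {q0 T2}) s t" "wt (inp T2) t" "wt (outp T2) r"
    "run2 (q0 T2) t r" by (auto simp: rel_H_iff rel_T2_iff)
  have "run1 (q0 T1) s t" using proj h by blast
  moreover have "ivt {q0 T2} t" using q02 h(5) by (auto simp: ivt_def)
  ultimately have "runM ((q0 T1, {q0 T2}), q0 T2) (canon s) r" using MC h by blast
  then show ?thesis using h canon_relabel by (auto simp: la_rel_iff)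
qed

lemma M_to_C:
  assumes sv: "single_valued (rel H O rel T2)" and m: "(s, r) \<in> la_rel MM"
  shows "(s, r) \<in> rel H O rel T2"
proof -
  from m obtain s' where h: "wt (inp T1) s" "wt (outp T2) r" "relabel (dom_aut H) s s'"
    "runM ((q0 T1, {q0 T2}), q0 T2) s' r" by (auto simp: la_rel_iff)
  have inC: "(s, r') \<in> rel H O rel T2" if "runH (q0 T1, {q0 T2}) s t'" "run2 (q0 T2) t' r'" for t' r'
  proof -
    have "wt (inp T2) t'" using H_out_wt that(1) h(1) by blast
    moreover have "wt (outp T2) r'" using run_wt[OF that(2) ok2] calculation by blast
    ultimately show ?thesis using that h(1) by (auto simp: rel_H_iff rel_T2_iff)
  qed
  have "Fun (q0 T1, {q0 T2}) (q0 T2) s"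
    unfolding Fun_def using inC sv by (meson single_valuedD)
  from MS[OF h(1,3,4) this] obtain t where "runH (q0 T1, {q0 T2}) s t" "run2 (q0 T2) t r" by blast
  then show ?thesis using inC by blast
qed

lemma main: "single_valued (rel H O rel T2) \<longleftrightarrow> single_valued (la_rel MM)"
proof
  assume sv: "single_valued (rel H O rel T2)"
  show "single_valued (la_rel MM)"
    by (rule single_valuedI) (use sv M_to_C in \<open>meson single_valuedD\<close>)
next
  assume sv: "single_valued (la_rel MM)"
  show "single_valued (rel H O rel T2)"
    by (rule single_valuedI) (use sv C_sub in \<open>meson single_valuedD\<close>)
qed

end

theorem corollary1:
  fixes T1 :: "('q1, 'f, 'g) tt" and T2 :: "('q2, 'g, 'h) tt"
  assumes "tdtt T1" and "tdtt T2" and "outp T1 = inp T2"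
  shows "single_valued (rel (That1 T1 T2) O rel T2) \<longleftrightarrow> single_valued (la_rel (constr_M T1 T2))"
proof -
  interpret cs T1 T2 using assms by unfold_locales
  show ?thesis by (rule main)
qed


end
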